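(* Let $x\in D(A)$ and $t\geq 0$. (i) It holds $S(t)x\in D(A)$ with $AS(t)x=S'_+(t,x)Ax$. If $S(t)$ is linear, this results in the relation $AS(t)x=S(t)Ax$. (ii) For $t>0$, it holds $\lim_{h\downarrow 0}\frac{S(t)x-S(t-h)x}{h}=S'_-(t,x)Ax$. (iii) It holds $S'_+(t,x)Ax=S'_-(t,x)Ax$. The mapping $[0,\infty)\to X$, $s\mapsto S(s)x$ is continuously differentiable and the derivative is given by $\frac{\mathrm{d}}{\mathrm{d}s}S(s)x=AS(s)x=S'_\pm(s,x)Ax$ for $s\geq 0$. (iv) It holds $S(t)x-x=\int_0^t AS(s)x\,\mathrm{d}s=\int_0^t S'_+(s,x)Ax\,\mathrm{d}s=\int_0^t S'_-(s,x)Ax\,\mathrm{d}s$.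
   Context: Let $X$ be a Banach lattice with order continuous norm (i.e., for every net $(x_\alpha)$ with $x_\alpha\downarrow 0$ one has $\|x_\alpha\|\to 0$). An operator $T\colon X\to X$ is called bounded if $\sup_{\|x\|\le r}\|Tx\|<\infty$ for all $r>0$, and convex if $T(\lambda x+(1-\lambda)y)\le \lambda Tx+(1-\lambda)Ty$ for all $\lambda\in[0,1]$, $x,y\in X$. Let $S=(S(t))_{t\in[0,\infty)}$ be a convex $C_0$-semigroup on $X$, i.e., a family of bounded convex operators $X\to X$ with $S(0)x=x$, $S(t+s)x=S(t)S(s)x$ for all $s,t\ge 0$, $x\in X$, and $S(t)x\to x$ as $t\downarrow 0$ for all $x\in X$. Its generator $A\colon D(A)\subset X\to X$ is defined by $Ax:=\lim_{h\downarrow 0}\frac{S(h)x-x}{h}$, where $D(A)$ is the set of all $x\in X$ for which this limit exists in norm. For $t\ge 0$ and $x,y\in X$, the one-sided directional derivatives are defined by $S'_+(t,x)y:=\inf_{h>0}\frac{S(t)(x+hy)-S(t)x}{h}$ and $S'_-(t,x)y:=\sup_{h<0}\frac{S(t)(x+hy)-S(t)x}{h}$ (the infimum/supremum in the lattice $X$; these exist in $X$ and are norm limits of the corresponding difference quotients as $h\to 0$, by order continuity of the norm). *)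

theory Defs
  imports "HOL-Analysis.Analysis"
begin

definition lmod :: "'a::{ordered_real_vector, lattice} \<Rightarrow> 'a" where
  "lmod x = sup x (- x)"

definition banach_lattice :: "'a::{banach, ordered_real_vector, lattice} itself \<Rightarrow> bool" where
  "banach_lattice _ \<longleftrightarrow> (\<forall>x y::'a. lmod x \<le> lmod y \<longrightarrow> norm x \<le> norm y)"

text \<open>Order continuous norm: every decreasing net with infimum 0 converges to 0 in norm.
A decreasing net is represented by its range, a nonempty downward directed set D whose
infimum is 0; norm convergence of the (monotone) net means that the norms of elements
of D become arbitrarily small.\<close>

definition order_continuous_norm :: "'a::{banach, ordered_real_vector, lattice} itself \<Rightarrow> bool" where
  "order_continuous_norm _ \<longleftrightarrow>
     (\<forall>D::'a set. D \<noteq> {} \<and> (\<forall>a\<in>D. \<forall>b\<in>D. \<exists>c\<in>D. c \<le> a \<and> c \<le> b)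
        \<and> (\<forall>d\<in>D. 0 \<le> d) \<and> (\<forall>y. (\<forall>d\<in>D. y \<le> d) \<longrightarrow> y \<le> 0)
        \<longrightarrow> (\<forall>e>0. \<exists>d\<in>D. norm d < e))"

definition bounded_op :: "('a::real_normed_vector \<Rightarrow> 'b::real_normed_vector) \<Rightarrow> bool" where
  "bounded_op T \<longleftrightarrow> (\<forall>r>0. \<exists>M. \<forall>x. norm x \<le> r \<longrightarrow> norm (T x) \<le> M)"

definition convex_op :: "('a::real_vector \<Rightarrow> 'b::ordered_real_vector) \<Rightarrow> bool" where
  "convex_op T \<longleftrightarrow> (\<forall>c::real. \<forall>x y. 0 \<le> c \<and> c \<le> 1 \<longrightarrow>
      T (c *\<^sub>R x + (1 - c) *\<^sub>R y) \<le> c *\<^sub>R T x + (1 - c) *\<^sub>R T y)"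

definition convex_C0_semigroup ::
  "(real \<Rightarrow> 'a::{banach, ordered_real_vector, lattice} \<Rightarrow> 'a) \<Rightarrow> bool" where
  "convex_C0_semigroup S \<longleftrightarrow>
     (\<forall>t\<ge>0. bounded_op (S t) \<and> convex_op (S t)) \<and>
     (\<forall>x. S 0 x = x) \<and>
     (\<forall>s\<ge>0. \<forall>t\<ge>0. \<forall>x. S (t + s) x = S t (S s x)) \<and>
     (\<forall>x. ((\<lambda>t. S t x) \<longlongrightarrow> x) (at_right 0))"

definition gen_domain :: "(real \<Rightarrow> 'a::real_normed_vector \<Rightarrow> 'a) \<Rightarrow> 'a set" where
  "gen_domain S = {x. \<exists>y. ((\<lambda>h. (1 / h) *\<^sub>R (S h x - x)) \<longlongrightarrow> y) (at_right 0)}"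

definition generator :: "(real \<Rightarrow> 'a::real_normed_vector \<Rightarrow> 'a) \<Rightarrow> 'a \<Rightarrow> 'a" where
  "generator S x = Lim (at_right 0) (\<lambda>h. (1 / h) *\<^sub>R (S h x - x))"

definition dir_deriv_plus ::
  "(real \<Rightarrow> 'a::{real_vector, order} \<Rightarrow> 'a) \<Rightarrow> real \<Rightarrow> 'a \<Rightarrow> 'a \<Rightarrow> 'a" where
  "dir_deriv_plus S t x y = (THE z.
     (\<forall>h>0. z \<le> (1 / h) *\<^sub>R (S t (x + h *\<^sub>R y) - S t x)) \<and>
     (\<forall>w. (\<forall>h>0. w \<le> (1 / h) *\<^sub>R (S t (x + h *\<^sub>R y) - S t x)) \<longrightarrow> w \<le> z))"

definition dir_deriv_minus ::
  "(real \<Rightarrow> 'a::{real_vector, order} \<Rightarrow> 'a) \<Rightarrow> real \<Rightarrow> 'a \<Rightarrow> 'a \<Rightarrow> 'a" where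
  "dir_deriv_minus S t x y = (THE z.
     (\<forall>h<0. (1 / h) *\<^sub>R (S t (x + h *\<^sub>R y) - S t x) \<le> z) \<and>
     (\<forall>w. (\<forall>h<0. (1 / h) *\<^sub>R (S t (x + h *\<^sub>R y) - S t x) \<le> w) \<longrightarrow> z \<le> w))"

end

theory Submission
  imports Defs
begin


section \<open>Banach lattice basics\<close>

lemma lmod_ge1: "x \<le> lmod x" and lmod_ge2: "- x \<le> lmod x"
  by (simp_all add: lmod_def)

lemma lmod_nonneg: "0 \<le> lmod (x::'a::{ordered_real_vector,lattice})"
proof -
  have "x + (- x) \<le> lmod x + lmod x" by (intro add_mono lmod_ge1 lmod_ge2)
  then have "0 \<le> lmod x + lmod x" by simp
  then have "0 \<le> (1/2::real) *\<^sub>R (lmod x + lmod x)" by (intro scaleR_nonneg_nonneg) auto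
  also have "(1/2::real) *\<^sub>R (lmod x + lmod x) = lmod x"
    by (metis scaleR_half_double)
  finally show ?thesis .
qed

lemma lmod_pos: "0 \<le> (x::'a::{ordered_real_vector,lattice}) \<Longrightarrow> lmod x = x"
  unfolding lmod_def
  by (metis neg_le_0_iff_le order_trans sup.absorb1)

lemma norm_lmod:
  fixes x :: "'a::{banach,ordered_real_vector,lattice}"
  assumes bl: "banach_lattice TYPE('a)"
  shows "norm (lmod x) = norm x"
proof -
  have *: "\<And>a b::'a. lmod a \<le> lmod b \<Longrightarrow> norm a \<le> norm b"
    using bl unfolding banach_lattice_def by blast
  have "lmod (lmod x) = lmod x" by (rule lmod_pos[OF lmod_nonneg])
  then show ?thesis using *[of "lmod x" x] *[of x "lmod x"] by auto
qed

lemma norm_mono_pos: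
  fixes a b :: "'a::{banach,ordered_real_vector,lattice}"
  assumes bl: "banach_lattice TYPE('a)" and "0 \<le> a" "a \<le> b"
  shows "norm a \<le> norm b"
proof -
  have *: "\<And>a b::'a. lmod a \<le> lmod b \<Longrightarrow> norm a \<le> norm b"
    using bl unfolding banach_lattice_def by blast
  have "0 \<le> b" using assms(2,3) by (rule order_trans)
  have "lmod a \<le> lmod b" using lmod_pos[OF assms(2)] lmod_pos[OF \<open>0 \<le> b\<close>] assms(3) by simp
  then show ?thesis by (rule *)
qed

lemma norm_sandwich:
  fixes a u b :: "'a::{banach,ordered_real_vector,lattice}"
  assumes bl: "banach_lattice TYPE('a)" and "a \<le> u" "u \<le> b"
  shows "norm u \<le> norm a + norm b"
proof -
  have *: "\<And>a b::'a. lmod a \<le> lmod b \<Longrightarrow> norm a \<le> norm b"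
    using bl unfolding banach_lattice_def by blast
  have s0: "0 \<le> lmod a + lmod b" by (intro add_nonneg_nonneg lmod_nonneg)
  have "u \<le> lmod a + lmod b"
    using assms(3) lmod_ge1[of b] lmod_nonneg[of a]
    by (metis add_increasing order_trans)
  moreover have "- u \<le> lmod a + lmod b"
    using assms(2) lmod_ge2[of a] lmod_nonneg[of b]
    by (metis add_increasing2 neg_le_iff_le order_trans)
  ultimately have "lmod u \<le> lmod a + lmod b" unfolding lmod_def[of u] by simp
  also have "\<dots> = lmod (lmod a + lmod b)" using lmod_pos[OF s0] by simp
  finally have "norm u \<le> norm (lmod a + lmod b)" by (rule *)
  also have "\<dots> \<le> norm (lmod a) + norm (lmod b)" by (rule norm_triangle_ineq)
  finally show ?thesis using norm_lmod[OF bl] by simp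
qed

lemma norm_sandwich':
  fixes a u b c :: "'a::{banach,ordered_real_vector,lattice}"
  assumes bl: "banach_lattice TYPE('a)" and "a \<le> u" "u \<le> b"
  shows "norm (u - c) \<le> norm (a - c) + norm (b - c)"
  using norm_sandwich[OF bl, of "a - c" "u - c" "b - c"] assms by (simp add: diff_right_mono)

definition negp :: "'a::{ordered_real_vector,lattice} \<Rightarrow> 'a" where
  "negp z = sup (- z) 0"

lemma negp_lip:
  fixes a b :: "'a::{banach,ordered_real_vector,lattice}"
  assumes bl: "banach_lattice TYPE('a)"
  shows "norm (negp a - negp b) \<le> 2 * norm (a - b)"
proof -
  have k1: "negp a \<le> negp b + lmod (a - b)" for a b :: 'a
  proof -
    have "- a \<le> negp b + lmod (a - b)"
    proof -
      have "- a = - b + (b - a)" by simp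
      also have "\<dots> \<le> negp b + lmod (a - b)"
        using lmod_ge2[of "a - b"] by (intro add_mono) (auto simp: negp_def)
      finally show ?thesis .
    qed
    moreover have "0 \<le> negp b + lmod (a - b)"
      by (intro add_nonneg_nonneg lmod_nonneg) (auto simp: negp_def)
    ultimately show ?thesis unfolding negp_def[of a] by simp
  qed
  have "negp a - negp b \<le> lmod (a - b)" using k1[of a b] by (simp add: algebra_simps)
  moreover have "- lmod (a - b) \<le> negp a - negp b"
  proof -
    have "lmod (b - a) = lmod (a - b)" unfolding lmod_def by (simp add: sup_commute)
    then show ?thesis using k1[of b a] by (simp add: algebra_simps)
  qed
  ultimately have "norm (negp a - negp b) \<le> norm (- lmod (a - b)) + norm (lmod (a - b))"
    using norm_sandwich[OF bl] by blast
  then show ?thesis using norm_lmod[OF bl] by simp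
qed

lemma nonneg_lim:
  fixes f :: "'b \<Rightarrow> 'a::{banach,ordered_real_vector,lattice}"
  assumes bl: "banach_lattice TYPE('a)" and lim: "(f \<longlongrightarrow> l) F" and F: "F \<noteq> bot"
    and ev: "eventually (\<lambda>i. 0 \<le> f i) F"
  shows "0 \<le> l"
proof -
  have "((\<lambda>i. negp (f i) - negp l) \<longlongrightarrow> 0) F"
  proof (rule Lim_null_comparison)
    show "\<forall>\<^sub>F i in F. norm (negp (f i) - negp l) \<le> 2 * norm (f i - l)"
      using negp_lip[OF bl] by auto
    have "((\<lambda>i. f i - l) \<longlongrightarrow> 0) F" using lim by (simp add: LIM_zero_iff)
    then have "((\<lambda>i. norm (f i - l)) \<longlongrightarrow> 0) F" using tendsto_norm_zero by blast
    then show "((\<lambda>i. 2 * norm (f i - l)) \<longlongrightarrow> 0) F" using tendsto_mult_right_zero by blast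
  qed
  then have "((\<lambda>i. negp (f i)) \<longlongrightarrow> negp l) F" by (simp add: LIM_zero_iff)
  moreover have "((\<lambda>i. negp (f i)) \<longlongrightarrow> 0) F"
  proof (rule tendsto_eventually)
    show "\<forall>\<^sub>F i in F. negp (f i) = 0"
      using ev by eventually_elim (auto simp: negp_def intro!: sup_absorb2)
  qed
  ultimately have "negp l = 0" using F tendsto_unique by blast
  then have "- l \<le> 0" unfolding negp_def by (metis sup.cobounded1)
  then show ?thesis by simp
qed

lemma le_lim:
  fixes f :: "'b \<Rightarrow> 'a::{banach,ordered_real_vector,lattice}"
  assumes bl: "banach_lattice TYPE('a)" and lim: "(f \<longlongrightarrow> l) F" and F: "F \<noteq> bot"
    and ev: "eventually (\<lambda>i. a \<le> f i) F"
  shows "a \<le> l"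
proof -
  have "((\<lambda>i. f i - a) \<longlongrightarrow> l - a) F" using lim by (intro tendsto_intros)
  moreover have "eventually (\<lambda>i. 0 \<le> f i - a) F" using ev by eventually_elim simp
  ultimately have "0 \<le> l - a" using nonneg_lim[OF bl _ F] by blast
  then show ?thesis by simp
qed

lemma lim_le:
  fixes f :: "'b \<Rightarrow> 'a::{banach,ordered_real_vector,lattice}"
  assumes bl: "banach_lattice TYPE('a)" and lim: "(f \<longlongrightarrow> l) F" and F: "F \<noteq> bot"
    and ev: "eventually (\<lambda>i. f i \<le> a) F"
  shows "l \<le> a"
proof -
  have "((\<lambda>i. a - f i) \<longlongrightarrow> a - l) F" using lim by (intro tendsto_intros)
  moreover have "eventually (\<lambda>i. 0 \<le> a - f i) F" using ev by eventually_elim simp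
  ultimately have "0 \<le> a - l" using nonneg_lim[OF bl _ F] by blast
  then show ?thesis by simp
qed

lemma tendsto_sandwich_vec:
  fixes a u b :: "'b \<Rightarrow> 'a::{banach,ordered_real_vector,lattice}"
  assumes bl: "banach_lattice TYPE('a)"
    and ev: "eventually (\<lambda>i. a i \<le> u i \<and> u i \<le> b i) F"
    and la: "(a \<longlongrightarrow> l) F" and lb: "(b \<longlongrightarrow> l) F"
  shows "(u \<longlongrightarrow> l) F"
proof -
  have "((\<lambda>i. u i - l) \<longlongrightarrow> 0) F"
  proof (rule Lim_null_comparison)
    show "\<forall>\<^sub>F i in F. norm (u i - l) \<le> norm (a i - l) + norm (b i - l)"
      using ev by eventually_elim (use norm_sandwich'[OF bl] in blast)
    have "((\<lambda>i. a i - l) \<longlongrightarrow> 0) F" "((\<lambda>i. b i - l) \<longlongrightarrow> 0) F"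
      using la lb by (simp_all add: LIM_zero_iff)
    then show "((\<lambda>i. norm (a i - l) + norm (b i - l)) \<longlongrightarrow> 0) F"
      using tendsto_add_zero tendsto_norm_zero by blast
  qed
  then show ?thesis by (simp add: LIM_zero_iff)
qed

lemma archimedean_zero:
  fixes z c :: "'a::{banach,ordered_real_vector,lattice}"
  assumes bl: "banach_lattice TYPE('a)" and z: "0 \<le> z" and b: "\<And>n::nat. real n *\<^sub>R z \<le> c"
  shows "z = 0"
proof (rule ccontr)
  assume "z \<noteq> 0"
  then have nz: "norm z > 0" by simp
  obtain n :: nat where n: "norm c / norm z < real n" using reals_Archimedean2 by blast
  have "norm (real n *\<^sub>R z) \<le> norm c"
    by (rule norm_mono_pos[OF bl _ b]) (intro scaleR_nonneg_nonneg, simp_all add: z)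
  then have "real n * norm z \<le> norm c" by simp
  with n nz show False by (simp add: field_simps)
qed



lemma mono_conv:
  fixes f :: "real \<Rightarrow> 'a::{banach,ordered_real_vector,lattice}"
  assumes bl: "banach_lattice TYPE('a)" and oc: "order_continuous_norm TYPE('a)"
    and mono: "\<And>h1 h2. 0 < h1 \<Longrightarrow> h1 \<le> h2 \<Longrightarrow> f h1 \<le> f h2"
    and lb: "\<And>h. 0 < h \<Longrightarrow> b \<le> f h"
  shows "\<exists>L. (f \<longlongrightarrow> L) (at_right 0) \<and> (\<forall>h>0. L \<le> f h) \<and> (\<forall>w. (\<forall>h>0. w \<le> f h) \<longrightarrow> w \<le> L)"
proof -
  define Lb where "Lb = {w. \<forall>h>0. w \<le> f h}"
  define D where "D = {f h - w | h w. 0 < h \<and> w \<in> Lb}"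
  have bLb: "b \<in> Lb" using lb by (auto simp: Lb_def)
  have D1: "D \<noteq> {}" using bLb unfolding D_def by (auto intro!: exI[of _ 1])
  have D2: "\<forall>a\<in>D. \<forall>b\<in>D. \<exists>c\<in>D. c \<le> a \<and> c \<le> b"
  proof (intro ballI)
    fix a c assume "a \<in> D" "c \<in> D"
    then obtain h1 w1 h2 w2 where a: "a = f h1 - w1" "0 < h1" "w1 \<in> Lb"
      and c: "c = f h2 - w2" "0 < h2" "w2 \<in> Lb" unfolding D_def by blast
    have sLb: "sup w1 w2 \<in> Lb" using a(3) c(3) by (auto simp: Lb_def)
    have m: "0 < min h1 h2" using a c by simp
    have "f (min h1 h2) - sup w1 w2 \<in> D" using sLb m unfolding D_def by blast
    moreover have "f (min h1 h2) - sup w1 w2 \<le> a"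
      unfolding a(1) by (intro diff_mono mono m) auto
    moreover have "f (min h1 h2) - sup w1 w2 \<le> c"
      unfolding c(1) by (intro diff_mono mono m) auto
    ultimately show "\<exists>d\<in>D. d \<le> a \<and> d \<le> c" by blast
  qed
  have D3: "\<forall>d\<in>D. 0 \<le> d" unfolding D_def Lb_def by auto
  have D4: "\<forall>y. (\<forall>d\<in>D. y \<le> d) \<longrightarrow> y \<le> 0"
  proof (intro allI impI)
    fix y assume y: "\<forall>d\<in>D. y \<le> d"
    define z where "z = sup y 0"
    have zD: "z \<le> d" if "d \<in> D" for d using y D3 that unfolding z_def by simp
    have ind: "b + real n *\<^sub>R z \<in> Lb" for n :: nat
    proof (induction n)
      case 0 then show ?case using bLb by simp
    next
      case (Suc n)
      show ?case unfolding Lb_def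
      proof (intro CollectI allI impI)
        fix h :: real assume h: "0 < h"
        have "f h - (b + real n *\<^sub>R z) \<in> D" using Suc h unfolding D_def by blast
        then have "z \<le> f h - (b + real n *\<^sub>R z)" by (rule zD)
        then show "b + real (Suc n) *\<^sub>R z \<le> f h" by (simp add: algebra_simps)
      qed
    qed
    have "real n *\<^sub>R z \<le> f 1 - b" for n :: nat
      using ind[of n] unfolding Lb_def by (auto simp: algebra_simps)
    then have "z = 0" by (intro archimedean_zero[OF bl]) (auto simp: z_def)
    then show "y \<le> 0" unfolding z_def by (metis sup.cobounded1)
  qed
  have small: "\<forall>e>0. \<exists>d\<in>D. norm d < e"
    using oc D1 D2 D3 D4 unfolding order_continuous_norm_def by blast
  have cau: "\<exists>h0>0. \<forall>h. 0 < h \<longrightarrow> h \<le> h0 \<longrightarrow> norm (f h0 - f h) < e" if e: "e > 0" for e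
  proof -
    obtain d where "d \<in> D" "norm d < e" using small e by blast
    then obtain h0 w where d: "d = f h0 - w" "0 < h0" "w \<in> Lb" unfolding D_def by blast
    have "norm (f h0 - f h) < e" if "0 < h" "h \<le> h0" for h
    proof -
      have "norm (f h0 - f h) \<le> norm (f h0 - w)"
      proof (rule norm_mono_pos[OF bl])
        show "0 \<le> f h0 - f h" using mono[OF that] by simp
        show "f h0 - f h \<le> f h0 - w" using d(3) that unfolding Lb_def by auto
      qed
      then show ?thesis using d \<open>norm d < e\<close> by simp
    qed
    then show ?thesis using d(2) by blast
  qed
  define a where "a n = f (1 / real (Suc n))" for n
  have hM: "\<exists>M. 1 / real (Suc M) \<le> h0" if "h0 > 0" for h0 :: real
  proof -
    obtain M :: nat where "1 / h0 < real M" using reals_Archimedean2 by blast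
    then have "1 / h0 \<le> real (Suc M)" by simp
    then have "1 / real (Suc M) \<le> h0" using that
      by (simp add: divide_le_eq mult.commute pos_divide_le_eq)
    then show ?thesis by blast
  qed
  have "Cauchy a"
  proof (rule metric_CauchyI)
    fix e :: real assume e: "e > 0"
    obtain h0 where h0: "h0 > 0" "\<forall>h. 0 < h \<longrightarrow> h \<le> h0 \<longrightarrow> norm (f h0 - f h) < e/2"
      using cau[of "e/2"] e by auto
    obtain M where M: "1 / real (Suc M) \<le> h0" using hM h0(1) by blast
    have le: "1 / real (Suc m) \<le> h0" if "m \<ge> M" for m
      using M that by (smt (verit, ccfv_SIG) frac_le le_SucI not_less_eq_eq of_nat_0_less_iff of_nat_le_iff zero_less_Suc)
    show "\<exists>M. \<forall>m\<ge>M. \<forall>n\<ge>M. dist (a m) (a n) < e"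
    proof (intro exI allI impI)
      fix m n assume "m \<ge> M" "n \<ge> M"
      then have "norm (f h0 - a m) < e/2" "norm (f h0 - a n) < e/2"
        using h0(2) le unfolding a_def by auto
      then have "norm (a m - a n) < e"
        using norm_triangle_ineq[of "a m - f h0" "f h0 - a n"] norm_minus_commute[of "a m" "f h0"]
        by simp
      then show "dist (a m) (a n) < e" by (simp add: dist_norm)
    qed
  qed
  then obtain L where aL: "a \<longlonglongrightarrow> L" using Cauchy_convergent_iff convergent_def by blast
  have fL: "(f \<longlongrightarrow> L) (at_right 0)"
  proof (rule tendstoI)
    fix e :: real assume e: "e > 0"
    obtain h0 where h0: "h0 > 0" "\<forall>h. 0 < h \<longrightarrow> h \<le> h0 \<longrightarrow> norm (f h0 - f h) < e/3"
      using cau[of "e/3"] e by auto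
    obtain M where M: "1 / real (Suc M) \<le> h0" using hM h0(1) by blast
    have le: "1 / real (Suc m) \<le> h0" if "m \<ge> M" for m
      using M that by (smt (verit, ccfv_SIG) frac_le le_SucI not_less_eq_eq of_nat_0_less_iff of_nat_le_iff zero_less_Suc)
    have "dist (f h) L < e" if h: "0 < h" "h < h0" for h
    proof -
      have "((\<lambda>n. norm (f h - a n)) \<longlongrightarrow> norm (f h - L)) sequentially"
        using aL by (intro tendsto_intros)
      moreover have "eventually (\<lambda>n. norm (f h - a n) \<le> 2*e/3) sequentially"
        unfolding eventually_sequentially
      proof (intro exI allI impI)
        fix n assume "n \<ge> M"
        then have "norm (f h0 - a n) < e/3" using h0(2) le unfolding a_def by auto
        moreover have "norm (f h0 - f h) < e/3" using h0(2) h by auto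
        ultimately show "norm (f h - a n) \<le> 2*e/3"
          using norm_triangle_ineq[of "f h - f h0" "f h0 - a n"] norm_minus_commute[of "f h" "f h0"]
          by simp
      qed
      ultimately have "norm (f h - L) \<le> 2*e/3"
        using tendsto_upperbound by (metis trivial_limit_sequentially)
      then show ?thesis using e by (simp add: dist_norm)
    qed
    then show "\<forall>\<^sub>F h in at_right 0. dist (f h) L < e"
      unfolding eventually_at_right[OF h0(1)] using h0(1) by blast
  qed
  have "\<forall>h>0. L \<le> f h"
  proof (intro allI impI)
    fix h :: real assume h: "h > 0"
    show "L \<le> f h"
    proof (rule lim_le[OF bl fL])
      show "at_right (0::real) \<noteq> bot" by simp
      show "\<forall>\<^sub>F i in at_right 0. f i \<le> f h"
        unfolding eventually_at_right[OF h] using mono h by (intro exI[of _ h]) auto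
    qed
  qed
  moreover have "\<forall>w. (\<forall>h>0. w \<le> f h) \<longrightarrow> w \<le> L"
  proof (intro allI impI)
    fix w assume w: "\<forall>h>0. w \<le> f h"
    show "w \<le> L"
    proof (rule le_lim[OF bl fL])
      show "at_right (0::real) \<noteq> bot" by simp
      show "\<forall>\<^sub>F i in at_right 0. w \<le> f i"
        unfolding eventually_at_right[OF zero_less_one] using w by (intro exI[of _ 1]) auto
    qed
  qed
  ultimately show ?thesis using fL by blast
qed



definition dq :: "('a::real_vector \<Rightarrow> 'a) \<Rightarrow> 'a \<Rightarrow> 'a \<Rightarrow> real \<Rightarrow> 'a" where
  "dq T x y h = (1/h) *\<^sub>R (T (x + h *\<^sub>R y) - T x)"

definition Dp :: "('a::{real_vector,order} \<Rightarrow> 'a) \<Rightarrow> 'a \<Rightarrow> 'a \<Rightarrow> 'a" where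
  "Dp T x y = (THE z.
     (\<forall>h>0. z \<le> (1 / h) *\<^sub>R (T (x + h *\<^sub>R y) - T x)) \<and>
     (\<forall>w. (\<forall>h>0. w \<le> (1 / h) *\<^sub>R (T (x + h *\<^sub>R y) - T x)) \<longrightarrow> w \<le> z))"

definition Dm :: "('a::{real_vector,order} \<Rightarrow> 'a) \<Rightarrow> 'a \<Rightarrow> 'a \<Rightarrow> 'a" where
  "Dm T x y = (THE z.
     (\<forall>h<0. (1 / h) *\<^sub>R (T (x + h *\<^sub>R y) - T x) \<le> z) \<and>
     (\<forall>w. (\<forall>h<0. (1 / h) *\<^sub>R (T (x + h *\<^sub>R y) - T x) \<le> w) \<longrightarrow> z \<le> w))"

lemma ddp_eq: "dir_deriv_plus S t x y = Dp (S t) x y"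
  by (simp add: dir_deriv_plus_def Dp_def)

lemma ddm_eq: "dir_deriv_minus S t x y = Dm (S t) x y"
  by (simp add: dir_deriv_minus_def Dm_def)

lemma convex_opD:
  fixes T :: "'a::real_vector \<Rightarrow> 'b::ordered_real_vector"
  assumes "convex_op T" "0 \<le> c" "c \<le> 1"
  shows "T (c *\<^sub>R a + (1 - c) *\<^sub>R b) \<le> c *\<^sub>R T a + (1 - c) *\<^sub>R T b"
  using assms unfolding convex_op_def by blast

lemma convex_half:
  fixes T :: "'a::real_vector \<Rightarrow> 'b::ordered_real_vector"
  assumes "convex_op T"
  shows "T ((1/2) *\<^sub>R a + (1/2) *\<^sub>R b) \<le> (1/2) *\<^sub>R T a + (1/2) *\<^sub>R T b"
  using convex_opD[OF assms, of "1/2" a b] by simp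

lemma dq_mono_pos:
  fixes T :: "'a::ordered_real_vector \<Rightarrow> 'a"
  assumes cv: "convex_op T" and h: "0 < h1" "h1 \<le> h2"
  shows "dq T x y h1 \<le> dq T x y h2"
proof -
  define c where "c = h1 / h2"
  have h2: "0 < h2" using h by simp
  have c: "0 \<le> c" "c \<le> 1" using h by (auto simp: c_def)
  have ch: "c * h2 = h1" using h2 by (simp add: c_def)
  have eq: "x + h1 *\<^sub>R y = c *\<^sub>R (x + h2 *\<^sub>R y) + (1 - c) *\<^sub>R x"
    by (simp add: algebra_simps ch flip: ch)
  have "T (x + h1 *\<^sub>R y) \<le> c *\<^sub>R T (x + h2 *\<^sub>R y) + (1 - c) *\<^sub>R T x"
    unfolding eq by (rule convex_opD[OF cv c])
  then have "T (x + h1 *\<^sub>R y) - T x \<le> c *\<^sub>R (T (x + h2 *\<^sub>R y) - T x)"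
    by (simp add: algebra_simps)
  then have "(1/h1) *\<^sub>R (T (x + h1 *\<^sub>R y) - T x) \<le> (1/h1) *\<^sub>R (c *\<^sub>R (T (x + h2 *\<^sub>R y) - T x))"
    by (rule scaleR_left_mono) (use h in simp)
  also have "(1/h1) *\<^sub>R (c *\<^sub>R (T (x + h2 *\<^sub>R y) - T x)) = (1/h2) *\<^sub>R (T (x + h2 *\<^sub>R y) - T x)"
    using h by (simp add: c_def)
  finally show ?thesis by (simp add: dq_def)
qed

lemma dq_neg: "dq T x y h = - dq T x (- y) (- h)"
  by (simp add: dq_def)

lemma dq_mono_neg:
  fixes T :: "'a::ordered_real_vector \<Rightarrow> 'a"
  assumes cv: "convex_op T" and h: "h1 \<le> h2" "h2 < 0"
  shows "dq T x y h1 \<le> dq T x y h2"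
proof -
  have "dq T x (-y) (-h2) \<le> dq T x (-y) (-h1)"
    by (rule dq_mono_pos[OF cv]) (use h in auto)
  then show ?thesis by (simp add: dq_neg[of T x y h1] dq_neg[of T x y h2])
qed

lemma dq_mono_mid:
  fixes T :: "'a::ordered_real_vector \<Rightarrow> 'a"
  assumes cv: "convex_op T" and h: "h < 0" "0 < k"
  shows "dq T x y h \<le> dq T x y k"
proof -
  define c where "c = k / (k - h)"
  have c: "0 \<le> c" "c \<le> 1" using h by (auto simp: c_def)
  have eq: "x = c *\<^sub>R (x + h *\<^sub>R y) + (1 - c) *\<^sub>R (x + k *\<^sub>R y)"
  proof -
    have "c * h + (1 - c) * k = 0" using h by (simp add: c_def field_simps)
    have "c *\<^sub>R (x + h *\<^sub>R y) + (1 - c) *\<^sub>R (x + k *\<^sub>R y) = x + (c * h + (1 - c) * k) *\<^sub>R y"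
      by (simp add: algebra_simps)
    then show ?thesis using \<open>c * h + (1 - c) * k = 0\<close> by simp
  qed
  have m0: "0 \<le> (k - h) / (- h * k)" using h by (intro divide_nonneg_nonneg) (auto simp: mult_nonpos_nonneg)
  have "T x \<le> c *\<^sub>R T (x + h *\<^sub>R y) + (1 - c) *\<^sub>R T (x + k *\<^sub>R y)"
    by (subst eq) (rule convex_opD[OF cv c])
  then have "0 \<le> c *\<^sub>R (T (x + h *\<^sub>R y) - T x) + (1 - c) *\<^sub>R (T (x + k *\<^sub>R y) - T x)"
    by (simp add: algebra_simps)
  then have "0 \<le> ((k - h) / (- h * k)) *\<^sub>R (c *\<^sub>R (T (x + h *\<^sub>R y) - T x) + (1 - c) *\<^sub>R (T (x + k *\<^sub>R y) - T x))"
    by (rule scaleR_nonneg_nonneg[OF m0])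
  also have "\<dots> = (1/k) *\<^sub>R (T (x + k *\<^sub>R y) - T x) - (1/h) *\<^sub>R (T (x + h *\<^sub>R y) - T x)"
  proof -
    have m1: "(k - h) / (- h * k) * c = - (1/h)" using h by (simp add: c_def field_simps)
    have m2: "(k - h) / (- h * k) * (1 - c) = 1/k" using h by (simp add: c_def field_simps)
    show ?thesis unfolding scaleR_add_right scaleR_scaleR m1 m2 by simp
  qed
  finally show ?thesis by (simp add: dq_def)
qed

lemma dq_bounds:
  fixes T :: "'a::ordered_real_vector \<Rightarrow> 'a"
  assumes cv: "convex_op T" and h: "h \<noteq> 0" "\<bar>h\<bar> \<le> 1"
  shows "T x - T (x - y) \<le> dq T x y h \<and> dq T x y h \<le> T (x + y) - T x"
proof -
  have d1: "dq T x y 1 = T (x + y) - T x" by (simp add: dq_def)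
  have dm1: "dq T x y (-1) = T x - T (x - y)" by (simp add: dq_def)
  show ?thesis
  proof (cases "h > 0")
    case True
    then show ?thesis using dq_mono_pos[OF cv True, of 1 x y] dq_mono_mid[OF cv _ True, of "-1" x y] h
      unfolding d1 dm1 by auto
  next
    case False
    then have "h < 0" using h by simp
    then show ?thesis using dq_mono_neg[OF cv, of "-1" h x y] dq_mono_mid[OF cv \<open>h < 0\<close>, of 1 x y] h
      unfolding d1 dm1 by auto
  qed
qed

lemma Dp_props:
  fixes T :: "'a::{banach,ordered_real_vector,lattice} \<Rightarrow> 'a"
  assumes bl: "banach_lattice TYPE('a)" and oc: "order_continuous_norm TYPE('a)"
    and cv: "convex_op T"
  shows "(dq T x y \<longlongrightarrow> Dp T x y) (at_right 0)"
    and "\<And>h. h > 0 \<Longrightarrow> Dp T x y \<le> dq T x y h"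
    and "\<And>h. h < 0 \<Longrightarrow> dq T x y h \<le> Dp T x y"
proof -
  obtain L where L: "(dq T x y \<longlongrightarrow> L) (at_right 0)" "\<forall>h>0. L \<le> dq T x y h"
    "\<forall>w. (\<forall>h>0. w \<le> dq T x y h) \<longrightarrow> w \<le> L"
    using mono_conv[OF bl oc, of "dq T x y" "dq T x y (-1)"] dq_mono_pos[OF cv] dq_mono_mid[OF cv, of "-1"]
    by force
  have "Dp T x y = L"
    unfolding Dp_def
    by (rule the_equality) (use L in \<open>auto simp: dq_def intro: antisym\<close>)
  then show "(dq T x y \<longlongrightarrow> Dp T x y) (at_right 0)" "\<And>h. h > 0 \<Longrightarrow> Dp T x y \<le> dq T x y h"
    using L by auto
  show "\<And>h. h < 0 \<Longrightarrow> dq T x y h \<le> Dp T x y"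
    using L \<open>Dp T x y = L\<close> dq_mono_mid[OF cv] by auto
qed

lemma Dm_props:
  fixes T :: "'a::{banach,ordered_real_vector,lattice} \<Rightarrow> 'a"
  assumes bl: "banach_lattice TYPE('a)" and oc: "order_continuous_norm TYPE('a)"
    and cv: "convex_op T"
  shows "((\<lambda>h. dq T x y (-h)) \<longlongrightarrow> Dm T x y) (at_right 0)"
    and "\<And>h. h < 0 \<Longrightarrow> dq T x y h \<le> Dm T x y"
    and "\<And>h. h > 0 \<Longrightarrow> Dm T x y \<le> dq T x y h"
proof -
  define g where "g h = - dq T x y (-h)" for h
  have gm: "g h1 \<le> g h2" if "0 < h1" "h1 \<le> h2" for h1 h2
    unfolding g_def using dq_mono_neg[OF cv, of "-h2" "-h1" x y] that by simp
  have glb: "- dq T x y 1 \<le> g h" if "0 < h" for h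
    unfolding g_def using dq_mono_mid[OF cv, of "-h" 1 x y] that by simp
  obtain L where L: "(g \<longlongrightarrow> L) (at_right 0)" "\<forall>h>0. L \<le> g h"
    "\<forall>w. (\<forall>h>0. w \<le> g h) \<longrightarrow> w \<le> L"
    using mono_conv[OF bl oc, of g "- dq T x y 1"] gm glb by force
  have up: "dq T x y h \<le> - L" if "h < 0" for h
    using L(2) that unfolding g_def by (metis minus_minus neg_0_less_iff_less neg_le_iff_le)
  have least: "- L \<le> w" if "\<forall>h<0. dq T x y h \<le> w" for w
  proof -
    have "\<forall>h>0. - w \<le> g h" using that unfolding g_def by auto
    then have "- w \<le> L" using L(3) by blast
    then show ?thesis by (simp add: minus_le_iff)
  qed
  have "Dm T x y = - L"
    unfolding Dm_def
    by (rule the_equality) (use up least in \<open>auto simp: dq_def intro: antisym\<close>)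
  moreover have "((\<lambda>h. dq T x y (-h)) \<longlongrightarrow> - L) (at_right 0)"
    using tendsto_minus[OF L(1)] unfolding g_def by simp
  ultimately show "((\<lambda>h. dq T x y (-h)) \<longlongrightarrow> Dm T x y) (at_right 0)" by simp
  show "\<And>h. h < 0 \<Longrightarrow> dq T x y h \<le> Dm T x y" using up \<open>Dm T x y = - L\<close> by simp
  show "\<And>h. h > 0 \<Longrightarrow> Dm T x y \<le> dq T x y h"
    using least dq_mono_mid[OF cv] \<open>Dm T x y = - L\<close> by auto
qed



lemma convex_oneside:
  fixes T :: "'a::ordered_real_vector \<Rightarrow> 'a"
  assumes cv: "convex_op T" and d: "d > 0" and r: "r > 0"
  shows "T v - T u \<le> (d / (r + d)) *\<^sub>R (T (v + (r / d) *\<^sub>R (v - u)) - T u)"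
proof -
  define \<alpha> where "\<alpha> = r / (r + d)"
  define w where "w = v + (r / d) *\<^sub>R (v - u)"
  have a0: "0 \<le> \<alpha>" "\<alpha> \<le> 1" using d r by (auto simp: \<alpha>_def)
  have a1: "1 - \<alpha> = d / (r + d)" using d r by (simp add: \<alpha>_def field_simps)
  have a2: "(1 - \<alpha>) * (r / d) = \<alpha>" using d r by (simp add: a1 \<alpha>_def field_simps)
  have "\<alpha> *\<^sub>R u + (1 - \<alpha>) *\<^sub>R w = \<alpha> *\<^sub>R u + ((1 - \<alpha>) *\<^sub>R v + \<alpha> *\<^sub>R (v - u))"
    unfolding w_def scaleR_add_right scaleR_scaleR a2 by simp
  also have "\<dots> = v" by (simp add: algebra_simps)
  finally have eq: "v = \<alpha> *\<^sub>R u + (1 - \<alpha>) *\<^sub>R w" by simp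
  have "T v \<le> \<alpha> *\<^sub>R T u + (1 - \<alpha>) *\<^sub>R T w"
    by (subst eq) (rule convex_opD[OF cv a0])
  then have "T v - T u \<le> (1 - \<alpha>) *\<^sub>R (T w - T u)" by (simp add: algebra_simps)
  then show ?thesis unfolding a1 w_def .
qed

lemma convex_lip:
  fixes T :: "'a::{banach,ordered_real_vector,lattice} \<Rightarrow> 'a"
  assumes bl: "banach_lattice TYPE('a)" and cv: "convex_op T" and r: "r > 0"
    and bnd: "\<And>z. z \<in> cball p (2*r) \<Longrightarrow> norm (T z) \<le> M"
  shows "\<And>u v. u \<in> cball p r \<Longrightarrow> v \<in> cball p r \<Longrightarrow> norm (T u - T v) \<le> (4*M/r) * norm (u - v)"
proof -
  fix u v assume u: "u \<in> cball p r" and v: "v \<in> cball p r"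
  have M0: "0 \<le> M" using bnd[of p] r by (smt (verit) centre_in_cball norm_ge_zero)
  show "norm (T u - T v) \<le> (4*M/r) * norm (u - v)"
  proof (cases "u = v")
    case True then show ?thesis by simp
  next
    case False
    define d where "d = norm (u - v)"
    have d: "d > 0" using False by (simp add: d_def)
    have inb: "a + (r/d) *\<^sub>R (a - b) \<in> cball p (2*r)" if "a \<in> cball p r" "norm (a - b) = d" for a b
    proof -
      have "dist p (a + (r/d) *\<^sub>R (a - b)) \<le> dist p a + norm ((r/d) *\<^sub>R (a - b))"
        by (metis dist_norm dist_triangle2 norm_minus_commute add_diff_cancel_left' dist_add_cancel)
      also have "norm ((r/d) *\<^sub>R (a - b)) = r" using that d r by simp
      finally show ?thesis using that by simp
    qed
    define w where "w = v + (r / d) *\<^sub>R (v - u)"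
    define w' where "w' = u + (r / d) *\<^sub>R (u - v)"
    have w: "w \<in> cball p (2*r)" unfolding w_def by (rule inb[OF v]) (simp add: d_def norm_minus_commute)
    have w': "w' \<in> cball p (2*r)" unfolding w'_def by (rule inb[OF u]) (simp add: d_def)
    have up: "T v - T u \<le> (d / (r + d)) *\<^sub>R (T w - T u)"
      unfolding w_def by (rule convex_oneside[OF cv d r])
    have lo0: "T u - T v \<le> (d / (r + d)) *\<^sub>R (T w' - T v)"
      unfolding w'_def by (rule convex_oneside[OF cv d r])
    then have lo: "- ((d / (r + d)) *\<^sub>R (T w' - T v)) \<le> T v - T u"
      using le_imp_neg_le[OF lo0] by simp
    have "norm (T v - T u) \<le> norm (- ((d / (r + d)) *\<^sub>R (T w' - T v))) + norm ((d / (r + d)) *\<^sub>R (T w - T u))"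
      by (rule norm_sandwich[OF bl lo up])
    also have "\<dots> = (d / (r + d)) * (norm (T w' - T v) + norm (T w - T u))"
      using d r by (simp only: norm_minus_cancel norm_scaleR distrib_left) simp
    also have "\<dots> \<le> (d / (r + d)) * (4 * M)"
    proof (rule mult_left_mono)
      have "norm (T w' - T v) \<le> norm (T w') + norm (T v)" by (rule norm_triangle_ineq4)
      moreover have "norm (T w - T u) \<le> norm (T w) + norm (T u)" by (rule norm_triangle_ineq4)
      moreover have "norm (T w') \<le> M" "norm (T v) \<le> M" "norm (T w) \<le> M" "norm (T u) \<le> M"
        using bnd w w' u v r by (auto simp: mem_cball)
      ultimately show "norm (T w' - T v) + norm (T w - T u) \<le> 4 * M" by simp
      show "0 \<le> d / (r + d)" using d r by simp
    qed
    also have "\<dots> \<le> (4*M/r) * d"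
    proof -
      have "d / (r + d) \<le> d / r" using d r by (intro divide_left_mono) auto
      then have "(d / (r + d)) * (4 * M) \<le> (d / r) * (4 * M)" using M0 by (intro mult_right_mono) auto
      then show ?thesis by (simp add: field_simps)
    qed
    finally show ?thesis by (simp add: d_def norm_minus_commute)
  qed
qed

lemma bounded_op_ball:
  assumes "bounded_op T"
  shows "\<exists>M. \<forall>z\<in>cball p r. norm (T z) \<le> M"
proof -
  obtain M where "\<forall>x. norm x \<le> norm p + r + 1 \<longrightarrow> norm (T x) \<le> M"
    using assms unfolding bounded_op_def by (smt (verit) norm_ge_zero)
  moreover have "norm z \<le> norm p + r + 1" if "z \<in> cball p r" for z
    using that norm_triangle_ineq2[of z p] by (auto simp: dist_norm norm_minus_commute)
  ultimately show ?thesis by blast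
qed

lemma single_lip:
  fixes T :: "'a::{banach,ordered_real_vector,lattice} \<Rightarrow> 'a"
  assumes bl: "banach_lattice TYPE('a)" and cv: "convex_op T" and bd: "bounded_op T"
  shows "\<exists>L. \<forall>u\<in>cball p 1. \<forall>v\<in>cball p 1. norm (T u - T v) \<le> L * norm (u - v)"
proof -
  obtain M where "\<forall>z\<in>cball p (2*1). norm (T z) \<le> M" using bounded_op_ball[OF bd] by blast
  then show ?thesis using convex_lip[OF bl cv zero_less_one, of p M] by blast
qed

lemma lip_isCont:
  fixes T :: "'a::real_normed_vector \<Rightarrow> 'b::real_normed_vector"
  assumes "\<forall>u\<in>cball p 1. \<forall>v\<in>cball p 1. norm (T u - T v) \<le> L * norm (u - v)"
  shows "isCont T p"
  unfolding continuous_at_eps_delta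
proof (intro allI impI)
  fix e :: real assume e: "e > 0"
  define d where "d = min 1 (e / (\<bar>L\<bar> + 1))"
  have d: "d > 0" using e by (simp add: d_def)
  have "dist (T x') (T p) < e" if "dist x' p < d" for x'
  proof -
    have "x' \<in> cball p 1" using that by (simp add: d_def dist_commute)
    then have "norm (T x' - T p) \<le> L * norm (x' - p)" using assms by auto
    also have "\<dots> \<le> (\<bar>L\<bar> + 1) * norm (x' - p)" by (intro mult_right_mono) auto
    also have "\<dots> < (\<bar>L\<bar> + 1) * (e / (\<bar>L\<bar> + 1))"
    proof (rule mult_strict_left_mono)
      show "norm (x' - p) < e / (\<bar>L\<bar> + 1)" using that by (simp add: d_def dist_norm)
    qed (smt (verit))
    also have "\<dots> = e" by (smt (verit) nonzero_mult_div_cancel_left times_divide_eq_right)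
    finally show ?thesis by (simp add: dist_norm)
  qed
  then show "\<exists>d>0. \<forall>x'. dist x' p < d \<longrightarrow> dist (T x') (T p) < e" using d by blast
qed

lemma convex_bounded_cont:
  fixes T :: "'a::{banach,ordered_real_vector,lattice} \<Rightarrow> 'a"
  assumes bl: "banach_lattice TYPE('a)" and cv: "convex_op T" and bd: "bounded_op T"
  shows "continuous_on UNIV T"
proof (rule continuous_at_imp_continuous_on, intro ballI)
  fix p :: 'a
  obtain L where "\<forall>u\<in>cball p 1. \<forall>v\<in>cball p 1. norm (T u - T v) \<le> L * norm (u - v)"
    using single_lip[OF bl cv bd] by blast
  then show "isCont T p" by (rule lip_isCont)
qed



lemma baire_convex:
  fixes T :: "nat \<Rightarrow> 'a::{banach,ordered_real_vector,lattice} \<Rightarrow> 'a"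
  assumes bl: "banach_lattice TYPE('a)" and cv: "\<And>n. convex_op (T n)"
    and ct: "\<And>n. continuous_on UNIV (T n)"
    and pb: "\<And>z. \<exists>C. \<forall>n. norm (T n z) \<le> C"
  shows "\<exists>\<rho>>0. \<exists>M. \<forall>n. \<forall>z\<in>ball p \<rho>. norm (T n z) \<le> M"
proof -
  define F where "F m = (\<Inter>n. {z. norm (T n z) \<le> real m})" for m :: nat
  have clF: "closed (F m)" for m
    unfolding F_def
  proof (intro closed_INT ballI)
    fix n
    show "closed {z. norm (T n z) \<le> real m}"
      by (rule closed_Collect_le) (intro continuous_on_norm ct, simp)
  qed
  have cover: "\<Union>(range F) = UNIV"
  proof (intro set_eqI iffI)
    fix z :: 'a
    obtain C where C: "\<forall>n. norm (T n z) \<le> C" using pb by blast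
    have "C \<le> real (nat \<lceil>C\<rceil>)" by linarith
    then have "z \<in> F (nat \<lceil>C\<rceil>)" using C unfolding F_def by (auto intro: order_trans)
    then show "z \<in> \<Union>(range F)" by blast
  qed auto
  have "\<exists>m. interior (F m) \<noteq> {}"
  proof (rule ccontr)
    assume "\<not> (\<exists>m. interior (F m) \<noteq> {})"
    then have e: "\<And>m. interior (F m) = {}" by blast
    have "euclidean interior_of \<Union>(range F) = {}"
    proof (rule Baire_category_alt)
      show "completely_metrizable_space (euclidean::'a topology) \<or>
            locally_compact_space (euclidean::'a topology) \<and> regular_space (euclidean::'a topology)"
        using completely_metrizable_space_euclidean by blast
      show "countable (range F)" by simp
      fix S assume "S \<in> range F"
      then show "closedin euclidean S \<and> euclidean interior_of S = {}"
        using clF e by (auto simp: closed_closedin[symmetric])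
    qed
    then show False using cover by simp
  qed
  then obtain m c where "c \<in> interior (F m)" by blast
  then obtain r where r: "r > 0" "ball c r \<subseteq> F m"
    by (meson interior_subset open_contains_ball open_interior subset_trans)
  have Fm: "norm (T n q) \<le> real m" if "q \<in> ball c r" for n q
    using r that unfolding F_def by blast
  define z2 where "z2 = 2 *\<^sub>R p - c"
  obtain C2 where C2: "\<forall>n. norm (T n z2) \<le> C2" using pb by blast
  obtain Cp where Cp: "\<forall>n. norm (T n p) \<le> Cp" using pb by blast
  have upper: "T n z \<le> (1/2) *\<^sub>R T n z2 + (1/2) *\<^sub>R T n (c + 2 *\<^sub>R (z - p))" for n z
  proof -
    have "z = (1/2) *\<^sub>R z2 + (1/2) *\<^sub>R (c + 2 *\<^sub>R (z - p))"
      by (simp add: z2_def algebra_simps)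
    then show ?thesis using convex_half[OF cv, of n z2 "c + 2 *\<^sub>R (z - p)"] by simp
  qed
  have inball: "c + 2 *\<^sub>R (z - p) \<in> ball c r" if "z \<in> ball p (r/2)" for z
    using that by (simp add: dist_norm norm_minus_commute)
  have "norm (T n z) \<le> 2 * Cp + C2 + real m" if z: "z \<in> ball p (r/2)" for n z
  proof -
    define z' where "z' = 2 *\<^sub>R p - z"
    have e: "p - z' = - (p - z)" by (simp add: z'_def algebra_simps scaleR_2)
    have z'b: "z' \<in> ball p (r/2)" using z by (simp add: dist_norm e norm_minus_commute)
    have "T n p \<le> (1/2) *\<^sub>R T n z + (1/2) *\<^sub>R T n z'"
    proof -
      have "p = (1/2) *\<^sub>R z + (1/2) *\<^sub>R z'" by (simp add: z'_def algebra_simps)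
      then show ?thesis using convex_half[OF cv, of n z z'] by simp
    qed
    then have "2 *\<^sub>R T n p \<le> 2 *\<^sub>R ((1/2) *\<^sub>R T n z + (1/2) *\<^sub>R T n z')"
      by (rule scaleR_left_mono) simp
    then have "2 *\<^sub>R T n p \<le> T n z + T n z'" by (simp add: scaleR_add_right)
    then have "2 *\<^sub>R T n p - T n z' \<le> T n z" by (simp add: algebra_simps)
    moreover have "T n z' \<le> (1/2) *\<^sub>R T n z2 + (1/2) *\<^sub>R T n (c + 2 *\<^sub>R (z' - p))" by (rule upper)
    ultimately have lo: "2 *\<^sub>R T n p - ((1/2) *\<^sub>R T n z2 + (1/2) *\<^sub>R T n (c + 2 *\<^sub>R (z' - p))) \<le> T n z"
      by (meson diff_left_mono order_trans)
    have "norm (T n z) \<le> norm (2 *\<^sub>R T n p - ((1/2) *\<^sub>R T n z2 + (1/2) *\<^sub>R T n (c + 2 *\<^sub>R (z' - p))))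
        + norm ((1/2) *\<^sub>R T n z2 + (1/2) *\<^sub>R T n (c + 2 *\<^sub>R (z - p)))"
      by (rule norm_sandwich[OF bl lo upper])
    also have "\<dots> \<le> (2 * Cp + (1/2) * C2 + (1/2) * real m) + ((1/2) * C2 + (1/2) * real m)"
    proof (rule add_mono)
      have a: "norm (T n (c + 2 *\<^sub>R (z' - p))) \<le> real m" by (rule Fm[OF inball[OF z'b]])
      have b: "norm (T n (c + 2 *\<^sub>R (z - p))) \<le> real m" by (rule Fm[OF inball[OF z]])
      have "norm (2 *\<^sub>R T n p - ((1/2) *\<^sub>R T n z2 + (1/2) *\<^sub>R T n (c + 2 *\<^sub>R (z' - p))))
          \<le> norm (2 *\<^sub>R T n p) + (norm ((1/2) *\<^sub>R T n z2) + norm ((1/2) *\<^sub>R T n (c + 2 *\<^sub>R (z' - p))))"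
        by (meson norm_triangle_ineq4 norm_triangle_ineq order_trans add_left_mono)
      also have "\<dots> \<le> 2 * Cp + ((1/2) * C2 + (1/2) * real m)"
        using Cp C2 a by (simp, intro add_mono) auto
      finally show "norm (2 *\<^sub>R T n p - ((1/2) *\<^sub>R T n z2 + (1/2) *\<^sub>R T n (c + 2 *\<^sub>R (z' - p))))
          \<le> 2 * Cp + (1/2) * C2 + (1/2) * real m" by simp
      have "norm ((1/2) *\<^sub>R T n z2 + (1/2) *\<^sub>R T n (c + 2 *\<^sub>R (z - p)))
          \<le> norm ((1/2) *\<^sub>R T n z2) + norm ((1/2) *\<^sub>R T n (c + 2 *\<^sub>R (z - p)))"
        by (rule norm_triangle_ineq)
      also have "\<dots> \<le> (1/2) * C2 + (1/2) * real m"
        using C2 b by (simp, intro add_mono) auto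
      finally show "norm ((1/2) *\<^sub>R T n z2 + (1/2) *\<^sub>R T n (c + 2 *\<^sub>R (z - p)))
          \<le> (1/2) * C2 + (1/2) * real m" .
    qed
    finally show ?thesis by simp
  qed
  then show ?thesis using r(1) by (intro exI[of _ "r/2"] conjI exI[of _ "2 * Cp + C2 + real m"]) auto
qed



lemma at_left_shift:
  "filterlim f F (at_left (a::real)) \<longleftrightarrow> filterlim (\<lambda>h. f (a - h)) F (at_right 0)"
  unfolding filterlim_at_left_to_right at_right_to_0[of "-a"] filterlim_filtermap by simp

lemma at_right_shift:
  "filterlim f F (at_right (a::real)) \<longleftrightarrow> filterlim (\<lambda>h. f (a + h)) F (at_right 0)"
  unfolding at_right_to_0[of a] filterlim_filtermap by (simp add: add.commute)

lemma at_within_Ici_pos: "(s::real) > 0 \<Longrightarrow> at s within {0..} = at s"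
  by (rule at_within_interior) simp

locale csg =
  fixes S :: "real \<Rightarrow> 'a::{banach,ordered_real_vector,lattice} \<Rightarrow> 'a"
  assumes bl: "banach_lattice TYPE('a)" and oc: "order_continuous_norm TYPE('a)"
    and sg: "convex_C0_semigroup S"
begin

lemma cvx: "t \<ge> 0 \<Longrightarrow> convex_op (S t)"
  using sg unfolding convex_C0_semigroup_def by blast

lemma bdd: "t \<ge> 0 \<Longrightarrow> bounded_op (S t)"
  using sg unfolding convex_C0_semigroup_def by blast

lemma S0: "S 0 x = x"
  using sg unfolding convex_C0_semigroup_def by blast

lemma sgp: "s \<ge> 0 \<Longrightarrow> t \<ge> 0 \<Longrightarrow> S (t + s) x = S t (S s x)"
  using sg unfolding convex_C0_semigroup_def by blast

lemma c0: "((\<lambda>t. S t x) \<longlongrightarrow> x) (at_right 0)"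
  using sg unfolding convex_C0_semigroup_def by blast

lemma cont: "t \<ge> 0 \<Longrightarrow> continuous_on UNIV (S t)"
  by (rule convex_bounded_cont[OF bl cvx bdd])

lemma isCont_S: "t \<ge> 0 \<Longrightarrow> isCont (S t) p"
  using cont by (simp add: continuous_on_eq_continuous_at)

lemma slip: "t \<ge> 0 \<Longrightarrow> \<exists>L. \<forall>u\<in>cball p 1. \<forall>v\<in>cball p 1. norm (S t u - S t v) \<le> L * norm (u - v)"
  by (rule single_lip[OF bl cvx bdd])

lemma c0_within: "((\<lambda>t. S t x) \<longlongrightarrow> x) (at 0 within {0..})"
  using c0 by (simp add: at_within_Ici_at_right)

lemma seq_c0:
  assumes "\<And>n. sf n \<ge> 0" "sf \<longlonglongrightarrow> 0"
  shows "(\<lambda>n. S (sf n) x) \<longlonglongrightarrow> x"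
proof -
  have "continuous (at 0 within {0..}) (\<lambda>t. S t x)"
    unfolding continuous_within using c0_within S0 by simp
  then show ?thesis using assms unfolding continuous_within_sequentially by (auto simp: o_def S0)
qed

lemma seq_bound:
  fixes sf :: "nat \<Rightarrow> real"
  assumes "\<And>n. sf n \<ge> 0" "\<And>z. \<exists>C. \<forall>n. norm (S (sf n) z) \<le> C"
  shows "\<exists>\<rho>>0. \<exists>M. \<forall>n. \<forall>z\<in>ball p \<rho>. norm (S (sf n) z) \<le> M"
proof (rule baire_convex[OF bl, of "\<lambda>n. S (sf n)"])
  fix n show "convex_op (S (sf n))" by (rule cvx[OF assms(1)])
  show "continuous_on UNIV (S (sf n))" by (rule cont[OF assms(1)])
next
  fix z show "\<exists>C. \<forall>n. norm (S (sf n) z) \<le> C" by (rule assms(2))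
qed

lemma seq_contra:
  assumes K: "K \<subseteq> {0..}"
    and pb: "\<And>sf. (\<And>n. sf n \<in> K) \<Longrightarrow> (\<And>n. Q n (sf n)) \<Longrightarrow> \<forall>z. \<exists>C. \<forall>n. norm (S (sf n) z) \<le> C"
    and cnd: "\<And>n. \<exists>s z. s \<in> K \<and> Q n s \<and> z \<in> ball p (1 / real (Suc n)) \<and> norm (S s z) > real n"
  shows False
proof -
  have "\<forall>n. \<exists>sz. fst sz \<in> K \<and> Q n (fst sz) \<and> snd sz \<in> ball p (1 / real (Suc n)) \<and> norm (S (fst sz) (snd sz)) > real n"
  proof
    fix n
    from cnd[of n] obtain s z where "s \<in> K \<and> Q n s \<and> z \<in> ball p (1 / real (Suc n)) \<and> norm (S s z) > real n"
      by blast
    then show "\<exists>sz. fst sz \<in> K \<and> Q n (fst sz) \<and> snd sz \<in> ball p (1 / real (Suc n)) \<and> norm (S (fst sz) (snd sz)) > real n"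
      by (intro exI[of _ "(s, z)"]) simp
  qed
  then have "\<exists>g. \<forall>n. fst (g n) \<in> K \<and> Q n (fst (g n)) \<and> snd (g n) \<in> ball p (1 / real (Suc n)) \<and> norm (S (fst (g n)) (snd (g n))) > real n"
    by (rule choice)
  then obtain g where g: "\<forall>n. fst (g n) \<in> K \<and> Q n (fst (g n)) \<and> snd (g n) \<in> ball p (1 / real (Suc n)) \<and> norm (S (fst (g n)) (snd (g n))) > real n"
    by blast
  define sf where "sf n = fst (g n)" for n
  define zf where "zf n = snd (g n)" for n
  have sz: "\<And>n. sf n \<in> K \<and> Q n (sf n) \<and> zf n \<in> ball p (1 / real (Suc n)) \<and> norm (S (sf n) (zf n)) > real n"
    using g unfolding sf_def zf_def by blast
  have "\<exists>\<rho>>0. \<exists>M. \<forall>n. \<forall>z\<in>ball p \<rho>. norm (S (sf n) z) \<le> M"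
  proof (rule seq_bound)
    show "\<And>n. 0 \<le> sf n" using sz K by blast
    have "\<And>n. sf n \<in> K" "\<And>n. Q n (sf n)" using sz by blast+
    then show "\<And>z. \<exists>C. \<forall>n. norm (S (sf n) z) \<le> C" using pb by blast
  qed
  then obtain \<rho> M where \<rho>: "\<rho> > 0" "\<forall>n. \<forall>z\<in>ball p \<rho>. norm (S (sf n) z) \<le> M" by blast
  obtain n1 :: nat where n1: "M < real n1" using reals_Archimedean2 by blast
  obtain n2 :: nat where n2: "1 / \<rho> < real n2" using reals_Archimedean2 by blast
  define n where "n = max n1 n2"
  have "1 / real (Suc n) \<le> \<rho>"
  proof -
    have "1 / \<rho> \<le> real (Suc n)" using n2 by (simp add: n_def)
    then show ?thesis using \<rho>(1) by (simp add: divide_le_eq mult.commute pos_divide_le_eq)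
  qed
  then have "zf n \<in> ball p \<rho>" using sz[of n] by auto
  then have "norm (S (sf n) (zf n)) \<le> M" using \<rho>(2) by blast
  moreover have "M < real n" using n1 by (simp add: n_def)
  ultimately show False using sz[of n] by simp
qed

lemma local_bound: "\<exists>\<delta>>0. \<exists>\<rho>>0. \<exists>M. \<forall>s\<in>{0..\<delta>}. \<forall>z\<in>ball p \<rho>. norm (S s z) \<le> M"
proof (rule ccontr)
  assume neg: "\<not> ?thesis"
  show False
  proof (rule seq_contra[of "{0..}" "\<lambda>n s. s \<le> 1 / real (Suc n)"])
    fix sf :: "nat \<Rightarrow> real" assume "\<And>n. sf n \<in> {0..}" "\<And>n. sf n \<le> 1 / real (Suc n)"
    then have s0: "\<And>n. sf n \<ge> 0" "\<And>n. sf n \<le> inverse (real (Suc n))" by (auto simp: inverse_eq_divide)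
    have "sf \<longlonglongrightarrow> 0"
      by (rule tendsto_sandwich[OF _ _ tendsto_const LIMSEQ_inverse_real_of_nat]) (use s0 in auto)
    show "\<forall>z. \<exists>C. \<forall>n. norm (S (sf n) z) \<le> C"
    proof
      fix z
      have "convergent (\<lambda>n. S (sf n) z)" using seq_c0[OF s0(1) \<open>sf \<longlonglongrightarrow> 0\<close>] by (auto simp: convergent_def)
      then have "Bseq (\<lambda>n. S (sf n) z)" by (rule convergent_imp_Bseq)
      then show "\<exists>C. \<forall>n. norm (S (sf n) z) \<le> C" unfolding Bseq_def by auto
    qed
  next
    fix n :: nat
    have "\<not> (\<forall>s\<in>{0..1 / real (Suc n)}. \<forall>z\<in>ball p (1 / real (Suc n)). norm (S s z) \<le> real n)"
    proof
      assume H: "\<forall>s\<in>{0..1 / real (Suc n)}. \<forall>z\<in>ball p (1 / real (Suc n)). norm (S s z) \<le> real n"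
      have "\<exists>\<delta>>0. \<exists>\<rho>>0. \<exists>M. \<forall>s\<in>{0..\<delta>}. \<forall>z\<in>ball p \<rho>. norm (S s z) \<le> M"
        by (rule exI[of _ "1 / real (Suc n)"], rule conjI, simp, rule exI[of _ "1 / real (Suc n)"],
            rule conjI, simp, rule exI[of _ "real n"], rule H)
      then show False using neg by blast
    qed
    then obtain s z where "s \<in> {0..1 / real (Suc n)}" "z \<in> ball p (1 / real (Suc n))" "\<not> norm (S s z) \<le> real n"
      by blast
    then show "\<exists>s z. s \<in> {0..} \<and> s \<le> 1 / real (Suc n) \<and> z \<in> ball p (1 / real (Suc n)) \<and> norm (S s z) > real n"
      by (intro exI[of _ s] exI[of _ z]) auto
  qed simp
qed

lemma local_lip: "\<exists>\<delta>>0. \<exists>\<rho>>0. \<exists>L. \<forall>s\<in>{0..\<delta>}. \<forall>u\<in>cball p \<rho>. \<forall>v\<in>cball p \<rho>. norm (S s u - S s v) \<le> L * norm (u - v)"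
proof -
  obtain \<delta> \<rho> M where b: "\<delta> > 0" "\<rho> > 0" "\<forall>s\<in>{0..\<delta>}. \<forall>z\<in>ball p \<rho>. norm (S s z) \<le> M"
    using local_bound by blast
  have "\<forall>s\<in>{0..\<delta>}. \<forall>u\<in>cball p (\<rho>/4). \<forall>v\<in>cball p (\<rho>/4). norm (S s u - S s v) \<le> (4*M/(\<rho>/4)) * norm (u - v)"
  proof (intro ballI)
    fix s u v assume s: "s \<in> {0..\<delta>}" and u: "u \<in> cball p (\<rho>/4)" and v: "v \<in> cball p (\<rho>/4)"
    show "norm (S s u - S s v) \<le> (4*M/(\<rho>/4)) * norm (u - v)"
    proof (rule convex_lip[OF bl cvx _ _ u v])
      show "0 \<le> s" using s by simp
      show "0 < \<rho>/4" using b by simp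
      fix z assume "z \<in> cball p (2 * (\<rho>/4))"
      then have "z \<in> ball p \<rho>" using b by auto
      then show "norm (S s z) \<le> M" using b s by blast
    qed
  qed
  moreover have "\<rho>/4 > 0" using b by simp
  ultimately show ?thesis using b(1) by blast
qed

end



context csg
begin

lemma orbit_right:
  assumes s0: "s0 \<ge> 0"
  shows "((\<lambda>s. S s z) \<longlongrightarrow> S s0 z) (at_right s0)"
proof (rule iffD2[OF at_right_shift])
  have "((\<lambda>h. S s0 (S h z)) \<longlongrightarrow> S s0 z) (at_right 0)"
    by (rule isCont_tendsto_compose[OF isCont_S[OF s0] c0])
  moreover have "\<forall>\<^sub>F h in at_right 0. S s0 (S h z) = S (s0 + h) z"
    unfolding eventually_at_right[OF zero_less_one]
  proof (intro exI[of _ 1] conjI allI impI)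
    fix h :: real assume "0 < h" "h < 1"
    then show "S s0 (S h z) = S (s0 + h) z" using sgp[of h s0 z] s0 by simp
  qed simp
  ultimately show "((\<lambda>h. S (s0 + h) z) \<longlongrightarrow> S s0 z) (at_right 0)"
    by (rule Lim_transform_eventually)
qed

lemma orbit_left:
  assumes s0: "s0 > 0"
  shows "((\<lambda>s. S s z) \<longlongrightarrow> S s0 z) (at_left s0)"
proof (rule iffD2[OF at_left_shift])
  obtain \<delta> \<rho> L where lip: "\<delta> > 0" "\<rho> > 0"
    "\<forall>s\<in>{0..\<delta>}. \<forall>u\<in>cball z \<rho>. \<forall>v\<in>cball z \<rho>. norm (S s u - S s v) \<le> L * norm (u - v)"
    using local_lip by blast
  define \<epsilon> where "\<epsilon> = min \<delta> s0"
  have \<epsilon>: "\<epsilon> > 0" "\<epsilon> \<le> \<delta>" "\<epsilon> \<le> s0" using lip s0 by (auto simp: \<epsilon>_def)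
  have g: "((\<lambda>h. S (\<epsilon> - h) z) \<longlongrightarrow> S \<epsilon> z) (at_right 0)"
  proof -
    have "((\<lambda>h. S (\<epsilon> - h) z - S \<epsilon> z) \<longlongrightarrow> 0) (at_right 0)"
    proof (rule Lim_null_comparison)
      have ev1: "\<forall>\<^sub>F h in at_right 0. dist (S h z) z < \<rho>"
        using c0[of z] lip(2) by (rule tendstoD)
      have ev2: "\<forall>\<^sub>F h in at_right 0. 0 < h \<and> h < \<epsilon>"
        unfolding eventually_at_right[OF \<epsilon>(1)] by (intro exI[of _ \<epsilon>]) (use \<epsilon> in auto)
      show "\<forall>\<^sub>F h in at_right 0. norm (S (\<epsilon> - h) z - S \<epsilon> z) \<le> L * norm (S h z - z)"
        using ev1 ev2
      proof eventually_elim
        case (elim h)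
        have eq: "S \<epsilon> z = S (\<epsilon> - h) (S h z)" using sgp[of h "\<epsilon> - h" z] elim by simp
        have s1: "\<epsilon> - h \<in> {0..\<delta>}" using elim \<epsilon> by simp
        have u1: "S h z \<in> cball z \<rho>" using elim by (simp add: dist_commute)
        have v1: "z \<in> cball z \<rho>" using lip(2) by simp
        have "norm (S (\<epsilon> - h) (S h z) - S (\<epsilon> - h) z) \<le> L * norm (S h z - z)"
          using lip(3) s1 u1 v1 by blast
        then show ?case unfolding eq by (simp add: norm_minus_commute)
      qed
      have "((\<lambda>h. S h z - z) \<longlongrightarrow> 0) (at_right 0)" using c0[of z] by (simp add: LIM_zero_iff)
      then show "((\<lambda>h. L * norm (S h z - z)) \<longlongrightarrow> 0) (at_right 0)"
        using tendsto_mult_right_zero tendsto_norm_zero by blast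
    qed
    then show ?thesis by (simp add: LIM_zero_iff)
  qed
  have t1: "((\<lambda>h. S (s0 - \<epsilon>) (S (\<epsilon> - h) z)) \<longlongrightarrow> S (s0 - \<epsilon>) (S \<epsilon> z)) (at_right 0)"
    by (rule isCont_tendsto_compose[OF isCont_S g]) (use \<epsilon> in simp)
  have e1: "S (s0 - \<epsilon>) (S \<epsilon> z) = S s0 z" using sgp[of \<epsilon> "s0 - \<epsilon>" z] \<epsilon> by simp
  have ev: "\<forall>\<^sub>F h in at_right 0. S (s0 - \<epsilon>) (S (\<epsilon> - h) z) = S (s0 - h) z"
    unfolding eventually_at_right[OF \<epsilon>(1)]
  proof (intro exI[of _ \<epsilon>] conjI allI impI)
    fix h :: real assume "0 < h" "h < \<epsilon>"
    then show "S (s0 - \<epsilon>) (S (\<epsilon> - h) z) = S (s0 - h) z" using sgp[of "\<epsilon> - h" "s0 - \<epsilon>" z] \<epsilon> by simp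
  qed (use \<epsilon> in simp)
  show "((\<lambda>h. S (s0 - h) z) \<longlongrightarrow> S s0 z) (at_right 0)"
    using Lim_transform_eventually[OF t1[unfolded e1] ev] .
qed

lemma orbit_tendsto:
  assumes s0: "s0 \<ge> 0"
  shows "((\<lambda>s. S s z) \<longlongrightarrow> S s0 z) (at s0 within {0..})"
proof (cases "s0 = 0")
  case True
  then show ?thesis using c0[of z] by (simp add: at_within_Ici_at_right S0)
next
  case False
  then have "s0 > 0" using s0 by simp
  then show ?thesis
    unfolding at_within_Ici_pos[OF \<open>s0 > 0\<close>] filterlim_at_split
    using orbit_left orbit_right s0 by blast
qed

lemma orbit_cont: "continuous_on {0..} (\<lambda>s. S s z)"
  unfolding continuous_on_eq_continuous_within continuous_within
  using orbit_tendsto by auto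

lemma orbit_bounded: "\<exists>C. \<forall>s\<in>{0..T}. norm (S s z) \<le> C"
proof -
  have "compact ((\<lambda>s. S s z) ` {0..T})"
    by (rule compact_continuous_image[OF continuous_on_subset[OF orbit_cont] compact_Icc]) auto
  then have "bounded ((\<lambda>s. S s z) ` {0..T})" by (rule compact_imp_bounded)
  then show ?thesis unfolding bounded_pos by auto
qed

lemma unif_bound: "\<exists>\<rho>>0. \<exists>M. \<forall>s\<in>{0..T}. \<forall>z\<in>ball p \<rho>. norm (S s z) \<le> M"
proof (rule ccontr)
  assume neg: "\<not> ?thesis"
  show False
  proof (rule seq_contra[of "{0..T}" "\<lambda>n s. True"])
    fix sf :: "nat \<Rightarrow> real" assume sf: "\<And>n. sf n \<in> {0..T}"
    show "\<forall>z. \<exists>C. \<forall>n. norm (S (sf n) z) \<le> C"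
    proof
      fix z
      obtain C where "\<forall>s\<in>{0..T}. norm (S s z) \<le> C" using orbit_bounded by blast
      then show "\<exists>C. \<forall>n. norm (S (sf n) z) \<le> C" using sf by blast
    qed
  next
    fix n :: nat
    have "\<not> (\<forall>s\<in>{0..T}. \<forall>z\<in>ball p (1 / real (Suc n)). norm (S s z) \<le> real n)"
    proof
      assume H: "\<forall>s\<in>{0..T}. \<forall>z\<in>ball p (1 / real (Suc n)). norm (S s z) \<le> real n"
      have "\<exists>\<rho>>0. \<exists>M. \<forall>s\<in>{0..T}. \<forall>z\<in>ball p \<rho>. norm (S s z) \<le> M"
        by (rule exI[of _ "1 / real (Suc n)"], rule conjI, simp, rule exI[of _ "real n"], rule H)
      then show False using neg by blast
    qed
    then obtain s z where "s \<in> {0..T}" "z \<in> ball p (1 / real (Suc n))" "\<not> norm (S s z) \<le> real n"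
      by blast
    then show "\<exists>s z. s \<in> {0..T} \<and> True \<and> z \<in> ball p (1 / real (Suc n)) \<and> norm (S s z) > real n"
      by (intro exI[of _ s] exI[of _ z]) auto
  qed auto
qed

lemma unif_lip: "\<exists>\<rho>>0. \<exists>L. \<forall>s\<in>{0..T}. \<forall>u\<in>cball p \<rho>. \<forall>v\<in>cball p \<rho>. norm (S s u - S s v) \<le> L * norm (u - v)"
proof -
  obtain \<rho> M where b: "\<rho> > 0" "\<forall>s\<in>{0..T}. \<forall>z\<in>ball p \<rho>. norm (S s z) \<le> M"
    using unif_bound by blast
  have "\<forall>s\<in>{0..T}. \<forall>u\<in>cball p (\<rho>/4). \<forall>v\<in>cball p (\<rho>/4). norm (S s u - S s v) \<le> (4*M/(\<rho>/4)) * norm (u - v)"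
  proof (intro ballI)
    fix s u v assume s: "s \<in> {0..T}" and u: "u \<in> cball p (\<rho>/4)" and v: "v \<in> cball p (\<rho>/4)"
    show "norm (S s u - S s v) \<le> (4*M/(\<rho>/4)) * norm (u - v)"
    proof (rule convex_lip[OF bl cvx _ _ u v])
      show "0 \<le> s" using s by simp
      show "0 < \<rho>/4" using b by simp
      fix z assume "z \<in> cball p (2 * (\<rho>/4))"
      then have "z \<in> ball p \<rho>" using b by auto
      then show "norm (S s z) \<le> M" using b s by blast
    qed
  qed
  moreover have "\<rho>/4 > 0" using b by simp
  ultimately show ?thesis by blast
qed

end



lemma lip_err:
  fixes E :: "'b \<Rightarrow> 'a::real_normed_vector" and G :: "'b \<Rightarrow> 'c::real_normed_vector"
  assumes "\<forall>\<^sub>F h in F. norm (E h) \<le> L * norm (G h)" and "(G \<longlongrightarrow> 0) F"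
  shows "(E \<longlongrightarrow> 0) F"
proof (rule Lim_null_comparison[OF assms(1)])
  show "((\<lambda>h. L * norm (G h)) \<longlongrightarrow> 0) F"
    using assms(2) tendsto_mult_right_zero tendsto_norm_zero by blast
qed

lemma ev_small: "\<forall>\<^sub>F h in at_right (0::real). 0 < h \<and> h < b" if "b > 0"
  unfolding eventually_at_right[OF that] by (intro exI[of _ b]) (use that in auto)

context csg
begin

lemma gen_lim:
  assumes "x \<in> gen_domain S"
  shows "((\<lambda>h. (1 / h) *\<^sub>R (S h x - x)) \<longlongrightarrow> generator S x) (at_right 0)"
proof -
  obtain y where y: "((\<lambda>h. (1 / h) *\<^sub>R (S h x - x)) \<longlongrightarrow> y) (at_right 0)"
    using assms unfolding gen_domain_def by blast
  have "generator S x = y" unfolding generator_def by (rule tendsto_Lim[OF _ y]) simp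
  then show ?thesis using y by simp
qed

lemma gen_intro:
  assumes "((\<lambda>h. (1 / h) *\<^sub>R (S h z - z)) \<longlongrightarrow> w) (at_right 0)"
  shows "z \<in> gen_domain S" "generator S z = w"
  using assms unfolding gen_domain_def generator_def
  by (auto intro: tendsto_Lim)

lemma dq_small_time: "((\<lambda>h. dq (S h) z w (-h)) \<longlongrightarrow> w) (at_right 0)"
proof (rule tendsto_sandwich_vec[OF bl])
  show "\<forall>\<^sub>F h in at_right 0. S h z - S h (z - w) \<le> dq (S h) z w (-h) \<and> dq (S h) z w (-h) \<le> S h (z + w) - S h z"
    using ev_small[OF zero_less_one]
  proof eventually_elim
    case (elim h)
    then show ?case using dq_bounds[OF cvx, of h "-h" z w] by simp
  qed
  show "((\<lambda>h. S h z - S h (z - w)) \<longlongrightarrow> w) (at_right 0)"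
    using tendsto_diff[OF c0[of z] c0[of "z - w"]] by simp
  show "((\<lambda>h. S h (z + w) - S h z) \<longlongrightarrow> w) (at_right 0)"
    using tendsto_diff[OF c0[of "z + w"] c0[of z]] by simp
qed

lemma back_small:
  assumes "((\<lambda>h. (1 / h) *\<^sub>R (S h z - z)) \<longlongrightarrow> w) (at_right 0)"
  shows "((\<lambda>h. (1 / h) *\<^sub>R (S h (z - h *\<^sub>R w) - z)) \<longlongrightarrow> 0) (at_right 0)"
proof -
  have "((\<lambda>h. - dq (S h) z w (-h) + (1 / h) *\<^sub>R (S h z - z)) \<longlongrightarrow> - w + w) (at_right 0)"
    by (intro tendsto_add tendsto_minus dq_small_time assms)
  moreover have "- dq (S h) z w (-h) + (1 / h) *\<^sub>R (S h z - z) = (1 / h) *\<^sub>R (S h (z - h *\<^sub>R w) - z)" for h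
    by (simp add: dq_def algebra_simps)
  ultimately show ?thesis by simp
qed

lemma back_small0:
  assumes "((\<lambda>h. (1 / h) *\<^sub>R (S h z - z)) \<longlongrightarrow> w) (at_right 0)"
  shows "((\<lambda>h. S h (z - h *\<^sub>R w) - z) \<longlongrightarrow> 0) (at_right 0)"
proof -
  have "((\<lambda>h. h *\<^sub>R ((1 / h) *\<^sub>R (S h (z - h *\<^sub>R w) - z))) \<longlongrightarrow> 0 *\<^sub>R 0) (at_right 0)"
    by (intro tendsto_scaleR back_small[OF assms]) (simp add: tendsto_ident_at)
  moreover have "\<forall>\<^sub>F h in at_right 0. h *\<^sub>R ((1 / h) *\<^sub>R (S h (z - h *\<^sub>R w) - z)) = S h (z - h *\<^sub>R w) - z"
    using ev_small[OF zero_less_one] by eventually_elim simp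
  ultimately show ?thesis by (simp add: Lim_transform_eventually)
qed

lemma small_vec: "((\<lambda>h. h *\<^sub>R (w::'a)) \<longlongrightarrow> 0) (at_right 0)"
proof -
  have "((\<lambda>h. h *\<^sub>R w) \<longlongrightarrow> 0 *\<^sub>R w) (at_right 0)"
    by (intro tendsto_scaleR tendsto_const) (simp add: tendsto_ident_at)
  then show ?thesis by simp
qed

lemma comm: "s \<ge> 0 \<Longrightarrow> t \<ge> 0 \<Longrightarrow> S s (S t z) = S t (S s z)"
  using sgp[of t s z] sgp[of s t z] by (simp add: add.commute)

lemma gen_orbit:
  assumes x: "x \<in> gen_domain S" and t: "t \<ge> 0"
  shows "((\<lambda>h. (1 / h) *\<^sub>R (S h (S t x) - S t x)) \<longlongrightarrow> Dp (S t) x (generator S x)) (at_right 0)"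
proof -
  define y where "y = generator S x"
  have v: "((\<lambda>h. (1 / h) *\<^sub>R (S h x - x)) \<longlongrightarrow> y) (at_right 0)" using gen_lim[OF x] by (simp add: y_def)
  obtain L where L: "\<forall>u\<in>cball x 1. \<forall>v\<in>cball x 1. norm (S t u - S t v) \<le> L * norm (u - v)"
    using slip[OF t] by blast
  have err: "((\<lambda>h. (1 / h) *\<^sub>R (S t (S h x) - S t (x + h *\<^sub>R y))) \<longlongrightarrow> 0) (at_right 0)"
  proof (rule lip_err)
    show "((\<lambda>h. (1 / h) *\<^sub>R (S h x - x) - y) \<longlongrightarrow> 0) (at_right 0)" using v by (simp add: LIM_zero_iff)
    have e1: "\<forall>\<^sub>F h in at_right 0. dist (S h x) x < 1" using c0[of x] by (rule tendstoD) simp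
    have e2: "\<forall>\<^sub>F h in at_right 0. dist (h *\<^sub>R y) 0 < 1" using small_vec[of y] by (rule tendstoD) simp
    show "\<forall>\<^sub>F h in at_right 0. norm ((1 / h) *\<^sub>R (S t (S h x) - S t (x + h *\<^sub>R y))) \<le> L * norm ((1 / h) *\<^sub>R (S h x - x) - y)"
      using e1 e2 ev_small[OF zero_less_one]
    proof eventually_elim
      case (elim h)
      have u: "S h x \<in> cball x 1" using elim by (simp add: dist_commute)
      have w: "x + h *\<^sub>R y \<in> cball x 1" using elim by (simp add: dist_norm)
      have "norm (S t (S h x) - S t (x + h *\<^sub>R y)) \<le> L * norm (S h x - (x + h *\<^sub>R y))"
        using L u w by blast
      moreover have "S h x - (x + h *\<^sub>R y) = h *\<^sub>R ((1 / h) *\<^sub>R (S h x - x) - y)"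
        using elim by (simp add: algebra_simps)
      ultimately have "norm (S t (S h x) - S t (x + h *\<^sub>R y)) \<le> h * (L * norm ((1 / h) *\<^sub>R (S h x - x) - y))"
        using elim by (simp add: mult.left_commute)
      then show ?case using elim by (simp add: divide_simps mult.commute)
    qed
  qed
  have "((\<lambda>h. dq (S t) x y h + (1 / h) *\<^sub>R (S t (S h x) - S t (x + h *\<^sub>R y))) \<longlongrightarrow> Dp (S t) x y + 0) (at_right 0)"
    by (intro tendsto_add err Dp_props(1)[OF bl oc cvx[OF t]])
  moreover have "\<forall>\<^sub>F h in at_right 0. dq (S t) x y h + (1 / h) *\<^sub>R (S t (S h x) - S t (x + h *\<^sub>R y)) = (1 / h) *\<^sub>R (S h (S t x) - S t x)"
    using ev_small[OF zero_less_one]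
  proof eventually_elim
    case (elim h)
    then show ?case using comm[of h t x] t by (simp add: dq_def algebra_simps)
  qed
  ultimately show ?thesis unfolding y_def by (simp add: Lim_transform_eventually)
qed

lemma part_i:
  assumes x: "x \<in> gen_domain S" and t: "t \<ge> 0"
  shows "S t x \<in> gen_domain S" "generator S (S t x) = Dp (S t) x (generator S x)"
  using gen_intro[OF gen_orbit[OF x t]] by auto

lemma part_i_lin:
  assumes x: "x \<in> gen_domain S" and t: "t \<ge> 0" and lin: "linear (S t)"
  shows "generator S (S t x) = S t (generator S x)"
proof -
  define y where "y = generator S x"
  have l1: "(dq (S t) x y \<longlongrightarrow> Dp (S t) x y) (at_right 0)" by (rule Dp_props(1)[OF bl oc cvx[OF t]])
  have l2: "\<forall>\<^sub>F h in at_right 0. dq (S t) x y h = S t y"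
    using ev_small[OF zero_less_one]
  proof eventually_elim
    case (elim h)
    then show ?case by (simp add: dq_def linear_add[OF lin] linear_scale[OF lin])
  qed
  have "((\<lambda>h::real. S t y) \<longlongrightarrow> Dp (S t) x y) (at_right 0)"
    using l1 tendsto_cong[OF l2] by simp
  then have "Dp (S t) x y = S t y" using tendsto_const tendsto_unique by (metis trivial_limit_at_right_real)
  then show ?thesis using part_i(2)[OF x t] by (simp add: y_def)
qed

lemma part_ii:
  assumes x: "x \<in> gen_domain S" and t: "t > 0"
  shows "((\<lambda>h. (1 / h) *\<^sub>R (S t x - S (t - h) x)) \<longlongrightarrow> Dm (S t) x (generator S x)) (at_right 0)"
proof -
  define y where "y = generator S x"
  have v: "((\<lambda>h. (1 / h) *\<^sub>R (S h x - x)) \<longlongrightarrow> y) (at_right 0)" using gen_lim[OF x] by (simp add: y_def)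
  obtain \<rho> L where L: "\<rho> > 0" "\<forall>s\<in>{0..t}. \<forall>u\<in>cball x \<rho>. \<forall>v\<in>cball x \<rho>. norm (S s u - S s v) \<le> L * norm (u - v)"
    using unif_lip by blast
  have err: "((\<lambda>h. (1 / h) *\<^sub>R (S t (x - h *\<^sub>R y) - S (t - h) x)) \<longlongrightarrow> 0) (at_right 0)"
  proof (rule lip_err)
    show "((\<lambda>h. (1 / h) *\<^sub>R (S h (x - h *\<^sub>R y) - x)) \<longlongrightarrow> 0) (at_right 0)" by (rule back_small[OF v])
    have e1: "\<forall>\<^sub>F h in at_right 0. dist (S h (x - h *\<^sub>R y) - x) 0 < \<rho>"
      using back_small0[OF v] L(1) by (rule tendstoD)
    show "\<forall>\<^sub>F h in at_right 0. norm ((1 / h) *\<^sub>R (S t (x - h *\<^sub>R y) - S (t - h) x)) \<le> L * norm ((1 / h) *\<^sub>R (S h (x - h *\<^sub>R y) - x))"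
      using e1 ev_small[OF t]
    proof eventually_elim
      case (elim h)
      have eq: "S t (x - h *\<^sub>R y) = S (t - h) (S h (x - h *\<^sub>R y))" using sgp[of h "t - h"] elim by simp
      have u: "S h (x - h *\<^sub>R y) \<in> cball x \<rho>" using elim by (simp add: dist_norm norm_minus_commute)
      have s: "t - h \<in> {0..t}" using elim by simp
      have "norm (S (t - h) (S h (x - h *\<^sub>R y)) - S (t - h) x) \<le> L * norm (S h (x - h *\<^sub>R y) - x)"
        using L(2) s u L(1) by auto
      then show ?case unfolding eq using elim by (simp add: divide_simps mult.commute)
    qed
  qed
  have "((\<lambda>h. dq (S t) x y (-h) + (1 / h) *\<^sub>R (S t (x - h *\<^sub>R y) - S (t - h) x)) \<longlongrightarrow> Dm (S t) x y + 0) (at_right 0)"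
    by (intro tendsto_add err Dm_props(1)[OF bl oc cvx]) (use t in simp)
  moreover have "dq (S t) x y (-h) + (1 / h) *\<^sub>R (S t (x - h *\<^sub>R y) - S (t - h) x) = (1 / h) *\<^sub>R (S t x - S (t - h) x)" for h
    by (simp add: dq_def algebra_simps)
  ultimately show ?thesis unfolding y_def by simp
qed

end



context csg
begin

lemma part_iii_eq:
  assumes x: "x \<in> gen_domain S" and t: "t \<ge> 0"
  shows "Dp (S t) x (generator S x) = Dm (S t) x (generator S x)"
proof -
  define y where "y = generator S x"
  define z where "z = S t x"
  define w where "w = Dm (S t) x y"
  have v: "((\<lambda>h. (1 / h) *\<^sub>R (S h x - x)) \<longlongrightarrow> y) (at_right 0)" using gen_lim[OF x] by (simp add: y_def)
  have R: "((\<lambda>h. (1 / h) *\<^sub>R (S h z - z)) \<longlongrightarrow> Dp (S t) x y) (at_right 0)"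
    using gen_orbit[OF x t] by (simp add: y_def z_def)
  obtain L1 where L1: "\<forall>u\<in>cball x 1. \<forall>v\<in>cball x 1. norm (S t u - S t v) \<le> L1 * norm (u - v)"
    using slip[OF t] by blast
  obtain \<rho> L2 where L2: "\<rho> > 0" "\<forall>s\<in>{0..1}. \<forall>u\<in>cball z \<rho>. \<forall>v\<in>cball z \<rho>. norm (S s u - S s v) \<le> L2 * norm (u - v)"
    using unif_lip by blast
  have E2: "((\<lambda>h. (1 / h) *\<^sub>R (S h (S t (x - h *\<^sub>R y)) - z)) \<longlongrightarrow> 0) (at_right 0)"
  proof (rule lip_err)
    show "((\<lambda>h. (1 / h) *\<^sub>R (S h (x - h *\<^sub>R y) - x)) \<longlongrightarrow> 0) (at_right 0)" by (rule back_small[OF v])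
    have e1: "\<forall>\<^sub>F h in at_right 0. dist (S h (x - h *\<^sub>R y) - x) 0 < 1"
      using back_small0[OF v] by (rule tendstoD) simp
    show "\<forall>\<^sub>F h in at_right 0. norm ((1 / h) *\<^sub>R (S h (S t (x - h *\<^sub>R y)) - z)) \<le> L1 * norm ((1 / h) *\<^sub>R (S h (x - h *\<^sub>R y) - x))"
      using e1 ev_small[OF zero_less_one]
    proof eventually_elim
      case (elim h)
      have eq: "S h (S t (x - h *\<^sub>R y)) = S t (S h (x - h *\<^sub>R y))" using comm[of h t] elim t by simp
      have u: "S h (x - h *\<^sub>R y) \<in> cball x 1" using elim by (simp add: dist_norm norm_minus_commute)
      have "norm (S t (S h (x - h *\<^sub>R y)) - S t x) \<le> L1 * norm (S h (x - h *\<^sub>R y) - x)"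
        using L1 u by auto
      then show ?case unfolding eq z_def using elim by (simp add: divide_simps mult.commute)
    qed
  qed
  have E1: "((\<lambda>h. (1 / h) *\<^sub>R (S h (z - h *\<^sub>R w) - S h (S t (x - h *\<^sub>R y)))) \<longlongrightarrow> 0) (at_right 0)"
  proof (rule lip_err)
    have "((\<lambda>h. w - dq (S t) x y (-h)) \<longlongrightarrow> w - w) (at_right 0)"
      unfolding w_def by (intro tendsto_diff tendsto_const Dm_props(1)[OF bl oc cvx[OF t]])
    moreover have "\<forall>\<^sub>F h in at_right 0. w - dq (S t) x y (-h) = (1 / h) *\<^sub>R (S t (x - h *\<^sub>R y) - (z - h *\<^sub>R w))"
      using ev_small[OF zero_less_one]
    proof eventually_elim
      case (elim h) then show ?case by (simp add: dq_def z_def algebra_simps)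
    qed
    ultimately show G: "((\<lambda>h. (1 / h) *\<^sub>R (S t (x - h *\<^sub>R y) - (z - h *\<^sub>R w))) \<longlongrightarrow> 0) (at_right 0)"
      by (simp add: Lim_transform_eventually)
    have c1: "((\<lambda>h. S t (x - h *\<^sub>R y)) \<longlongrightarrow> z) (at_right 0)"
    proof -
      have "((\<lambda>h. x - h *\<^sub>R y) \<longlongrightarrow> x - 0) (at_right 0)" by (intro tendsto_diff tendsto_const small_vec)
      then show ?thesis unfolding z_def using isCont_tendsto_compose[OF isCont_S[OF t]] by simp
    qed
    have e1: "\<forall>\<^sub>F h in at_right 0. dist (S t (x - h *\<^sub>R y)) z < \<rho>" using c1 L2(1) by (rule tendstoD)
    have e2: "\<forall>\<^sub>F h in at_right 0. dist (h *\<^sub>R w) 0 < \<rho>" using small_vec L2(1) by (rule tendstoD)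
    show "\<forall>\<^sub>F h in at_right 0. norm ((1 / h) *\<^sub>R (S h (z - h *\<^sub>R w) - S h (S t (x - h *\<^sub>R y)))) \<le> L2 * norm ((1 / h) *\<^sub>R (S t (x - h *\<^sub>R y) - (z - h *\<^sub>R w)))"
      using e1 e2 ev_small[OF zero_less_one]
    proof eventually_elim
      case (elim h)
      have u: "z - h *\<^sub>R w \<in> cball z \<rho>" using elim by (simp add: dist_norm)
      have v: "S t (x - h *\<^sub>R y) \<in> cball z \<rho>" using elim by (simp add: dist_commute)
      have s: "h \<in> {0..1}" using elim by simp
      have "norm (S h (z - h *\<^sub>R w) - S h (S t (x - h *\<^sub>R y))) \<le> L2 * norm ((z - h *\<^sub>R w) - S t (x - h *\<^sub>R y))"
        using L2(2) s u v by blast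
      then show ?case using elim by (simp add: divide_simps mult.commute norm_minus_commute)
    qed
  qed
  have "((\<lambda>h. dq (S h) z w (-h) + (1 / h) *\<^sub>R (S h (z - h *\<^sub>R w) - S h (S t (x - h *\<^sub>R y)))
      + (1 / h) *\<^sub>R (S h (S t (x - h *\<^sub>R y)) - z)) \<longlongrightarrow> w + 0 + 0) (at_right 0)"
    by (intro tendsto_add E1 E2 dq_small_time)
  moreover have "dq (S h) z w (-h) + (1 / h) *\<^sub>R (S h (z - h *\<^sub>R w) - S h (S t (x - h *\<^sub>R y)))
      + (1 / h) *\<^sub>R (S h (S t (x - h *\<^sub>R y)) - z) = (1 / h) *\<^sub>R (S h z - z)" for h
    by (simp add: dq_def algebra_simps)
  ultimately have "((\<lambda>h. (1 / h) *\<^sub>R (S h z - z)) \<longlongrightarrow> w) (at_right 0)" by simp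
  then have "Dp (S t) x y = w" using R tendsto_unique by (metis trivial_limit_at_right_real)
  then show ?thesis by (simp add: w_def y_def)
qed

lemma gen_eqs:
  assumes x: "x \<in> gen_domain S" and t: "t \<ge> 0"
  shows "generator S (S t x) = Dp (S t) x (generator S x)"
    "generator S (S t x) = Dm (S t) x (generator S x)"
  using part_i(2)[OF x t] part_iii_eq[OF x t] by auto

lemma deriv:
  assumes x: "x \<in> gen_domain S" and s: "s \<ge> 0"
  shows "((\<lambda>r. S r x) has_vector_derivative generator S (S s x)) (at s within {0..})"
proof -
  define g where "g = generator S (S s x)"
  have right: "((\<lambda>h. (1 / h) *\<^sub>R (S (s + h) x - S s x)) \<longlongrightarrow> g) (at_right 0)"
  proof -
    have "((\<lambda>h. (1 / h) *\<^sub>R (S h (S s x) - S s x)) \<longlongrightarrow> g) (at_right 0)"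
      unfolding g_def by (rule gen_lim[OF part_i(1)[OF x s]])
    moreover have "\<forall>\<^sub>F h in at_right 0. (1 / h) *\<^sub>R (S h (S s x) - S s x) = (1 / h) *\<^sub>R (S (s + h) x - S s x)"
      using ev_small[OF zero_less_one]
    proof eventually_elim
      case (elim h) then show ?case using sgp[of s h x] s by (simp add: add.commute)
    qed
    ultimately show ?thesis by (rule Lim_transform_eventually)
  qed
  let ?Q = "\<lambda>r. (1 / norm (r - s)) *\<^sub>R (S r x - (S s x + (r - s) *\<^sub>R g))"
  have Qr: "(?Q \<longlongrightarrow> 0) (at_right s)"
  proof (rule iffD2[OF at_right_shift])
    have "((\<lambda>h. (1 / h) *\<^sub>R (S (s + h) x - S s x) - g) \<longlongrightarrow> g - g) (at_right 0)"
      by (intro tendsto_diff right tendsto_const)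
    moreover have "\<forall>\<^sub>F h in at_right 0. (1 / h) *\<^sub>R (S (s + h) x - S s x) - g = ?Q (s + h)"
      using ev_small[OF zero_less_one]
    proof eventually_elim
      case (elim h) then show ?case by (simp add: algebra_simps)
    qed
    ultimately show "((\<lambda>h. ?Q (s + h)) \<longlongrightarrow> 0) (at_right 0)" by (simp add: Lim_transform_eventually)
  qed
  have Q: "(?Q \<longlongrightarrow> 0) (at s within {0..})"
  proof (cases "s = 0")
    case True
    then show ?thesis using Qr by (simp add: at_within_Ici_at_right)
  next
    case False
    then have s0: "s > 0" using s by simp
    have Ql: "(?Q \<longlongrightarrow> 0) (at_left s)"
    proof (rule iffD2[OF at_left_shift])
      have "((\<lambda>h. g - (1 / h) *\<^sub>R (S s x - S (s - h) x)) \<longlongrightarrow> g - g) (at_right 0)"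
      proof (intro tendsto_diff tendsto_const)
        show "((\<lambda>h. (1 / h) *\<^sub>R (S s x - S (s - h) x)) \<longlongrightarrow> g) (at_right 0)"
          using part_ii[OF x s0] gen_eqs(2)[OF x s] by (simp add: g_def)
      qed
      moreover have "\<forall>\<^sub>F h in at_right 0. g - (1 / h) *\<^sub>R (S s x - S (s - h) x) = ?Q (s - h)"
        using ev_small[OF zero_less_one]
      proof eventually_elim
        case (elim h) then show ?case by (simp add: algebra_simps)
      qed
      ultimately show "((\<lambda>h. ?Q (s - h)) \<longlongrightarrow> 0) (at_right 0)" by (simp add: Lim_transform_eventually)
    qed
    show ?thesis
      unfolding at_within_Ici_pos[OF s0] filterlim_at_split using Ql Qr by blast
  qed
  show ?thesis
    unfolding has_vector_derivative_def has_derivative_within g_def[symmetric]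
    using Q by (simp add: bounded_linear_scaleR_left)
qed

lemma gcont:
  assumes x: "x \<in> gen_domain S"
  shows "continuous_on {0..} (\<lambda>s. generator S (S s x))"
  unfolding continuous_on_eq_continuous_within continuous_within
proof (intro ballI tendstoI)
  fix t0 :: real and e :: real
  assume t0: "t0 \<in> {0..}" and e: "e > 0"
  define y where "y = generator S x"
  define G where "G s = generator S (S s x)" for s
  have Gp: "G s = Dp (S s) x y" "G s = Dm (S s) x y" if "s \<ge> 0" for s
    using gen_eqs[OF x that] by (simp_all add: G_def y_def)
  have t0': "t0 \<ge> 0" using t0 by simp
  have a1: "\<forall>\<^sub>F h in at_right 0. dist (dq (S t0) x y h) (G t0) < e/4"
    using Dp_props(1)[OF bl oc cvx[OF t0'], of x y] e unfolding Gp(1)[OF t0'] by (intro tendstoD) auto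
  have a2: "\<forall>\<^sub>F h in at_right 0. dist (dq (S t0) x y (-h)) (G t0) < e/4"
    using Dm_props(1)[OF bl oc cvx[OF t0'], of x y] e unfolding Gp(2)[OF t0'] by (intro tendstoD) auto
  have "\<forall>\<^sub>F h in at_right 0. (0 < h \<and> h < 1) \<and> dist (dq (S t0) x y h) (G t0) < e/4 \<and> dist (dq (S t0) x y (-h)) (G t0) < e/4"
    using ev_small[OF zero_less_one] a1 a2 by eventually_elim blast
  then obtain k where k: "0 < k" "dist (dq (S t0) x y k) (G t0) < e/4" "dist (dq (S t0) x y (-k)) (G t0) < e/4"
    using eventually_happens[of _ "at_right (0::real)"] by force
  have dqc: "((\<lambda>s. dq (S s) x y c) \<longlongrightarrow> dq (S t0) x y c) (at t0 within {0..})" for c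
    unfolding dq_def by (intro tendsto_intros orbit_tendsto t0')
  have b1: "\<forall>\<^sub>F s in at t0 within {0..}. dist (dq (S s) x y k) (dq (S t0) x y k) < e/4"
    using dqc e by (intro tendstoD) auto
  have b2: "\<forall>\<^sub>F s in at t0 within {0..}. dist (dq (S s) x y (-k)) (dq (S t0) x y (-k)) < e/4"
    using dqc e by (intro tendstoD) auto
  have b3: "\<forall>\<^sub>F s in at t0 within {0..}. s \<in> {0..}"
    by (auto simp: eventually_at_filter)
  show "\<forall>\<^sub>F s in at t0 within {0..}. dist (generator S (S s x)) (generator S (S t0 x)) < e"
    using b1 b2 b3
  proof eventually_elim
    case (elim s)
    then have s: "s \<ge> 0" by simp
    have lo: "dq (S s) x y (-k) \<le> G s" unfolding Gp(2)[OF s] by (rule Dm_props(2)[OF bl oc cvx[OF s]]) (use k in simp)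
    have up: "G s \<le> dq (S s) x y k" unfolding Gp(1)[OF s] by (rule Dp_props(2)[OF bl oc cvx[OF s]]) (use k in simp)
    have "norm (G s - G t0) \<le> norm (dq (S s) x y (-k) - G t0) + norm (dq (S s) x y k - G t0)"
      by (rule norm_sandwich'[OF bl lo up])
    also have "\<dots> < e"
    proof -
      have "norm (dq (S s) x y (-k) - G t0) \<le> norm (dq (S s) x y (-k) - dq (S t0) x y (-k)) + norm (dq (S t0) x y (-k) - G t0)"
        by (rule norm_diff_triangle_le[where y="dq (S t0) x y (-k)"]) simp_all
      moreover have "norm (dq (S s) x y k - G t0) \<le> norm (dq (S s) x y k - dq (S t0) x y k) + norm (dq (S t0) x y k - G t0)"
        by (rule norm_diff_triangle_le[where y="dq (S t0) x y k"]) simp_all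
      ultimately show ?thesis using elim k by (simp add: dist_norm)
    qed
    finally show ?case by (simp add: G_def dist_norm)
  qed
qed

end

theorem theorem3p3:
  fixes S :: "real \<Rightarrow> 'a::{banach, ordered_real_vector, lattice} \<Rightarrow> 'a"
    and x :: 'a and t :: real
  assumes "banach_lattice TYPE('a)"
    and "order_continuous_norm TYPE('a)"
    and "convex_C0_semigroup S"
    and "x \<in> gen_domain S"
    and "t \<ge> 0"
  shows
    \<comment> \<open>(i)\<close>
    "(S t x \<in> gen_domain S \<and>
      generator S (S t x) = dir_deriv_plus S t x (generator S x) \<and>
      (linear (S t) \<longrightarrow> generator S (S t x) = S t (generator S x)))
    \<comment> \<open>(ii)\<close>
    \<and> (t > 0 \<longrightarrow>
        ((\<lambda>h. (1 / h) *\<^sub>R (S t x - S (t - h) x)) \<longlongrightarrow> dir_deriv_minus S t x (generator S x))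
          (at_right 0))
    \<comment> \<open>(iii)\<close>
    \<and> dir_deriv_plus S t x (generator S x) = dir_deriv_minus S t x (generator S x)
    \<and> (\<forall>s\<ge>0. ((\<lambda>r. S r x) has_vector_derivative generator S (S s x)) (at s within {0..})
              \<and> generator S (S s x) = dir_deriv_plus S s x (generator S x)
              \<and> generator S (S s x) = dir_deriv_minus S s x (generator S x))
    \<and> continuous_on {0..} (\<lambda>s. generator S (S s x))
    \<comment> \<open>(iv)\<close>
    \<and> ((\<lambda>s. generator S (S s x)) has_integral (S t x - x)) {0..t}
    \<and> ((\<lambda>s. dir_deriv_plus S s x (generator S x)) has_integral (S t x - x)) {0..t}
    \<and> ((\<lambda>s. dir_deriv_minus S s x (generator S x)) has_integral (S t x - x)) {0..t}"
proof -
  interpret csg S using assms(1-3) by unfold_locales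
  note x = assms(4) and t = assms(5)
  have I: "((\<lambda>s. generator S (S s x)) has_integral (S t x - x)) {0..t}"
  proof -
    have "((\<lambda>s. generator S (S s x)) has_integral (S t x - S 0 x)) {0..t}"
    proof (rule fundamental_theorem_of_calculus[OF t])
      fix s assume "s \<in> {0..t}"
      then show "((\<lambda>r. S r x) has_vector_derivative generator S (S s x)) (at s within {0..t})"
        by (intro has_vector_derivative_within_subset[OF deriv[OF x]]) auto
    qed
    then show ?thesis by (simp add: S0)
  qed
  have I2: "((\<lambda>s. dir_deriv_plus S s x (generator S x)) has_integral (S t x - x)) {0..t}"
  proof (subst has_integral_cong[where g="\<lambda>s. generator S (S s x)"])
    fix s assume "s \<in> {0..t}"
    then have "s \<ge> 0" by simp
    then show "dir_deriv_plus S s x (generator S x) = generator S (S s x)"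
      unfolding ddp_eq by (rule gen_eqs(1)[OF x, symmetric])
  qed (rule I)
  have I3: "((\<lambda>s. dir_deriv_minus S s x (generator S x)) has_integral (S t x - x)) {0..t}"
  proof (subst has_integral_cong[where g="\<lambda>s. generator S (S s x)"])
    fix s assume "s \<in> {0..t}"
    then have "s \<ge> 0" by simp
    then show "dir_deriv_minus S s x (generator S x) = generator S (S s x)"
      unfolding ddm_eq by (rule gen_eqs(2)[OF x, symmetric])
  qed (rule I)
  have D: "\<forall>s\<ge>0. ((\<lambda>r. S r x) has_vector_derivative generator S (S s x)) (at s within {0..})
              \<and> generator S (S s x) = dir_deriv_plus S s x (generator S x)
              \<and> generator S (S s x) = dir_deriv_minus S s x (generator S x)"
  proof (intro allI impI conjI)
    fix s :: real assume s: "s \<ge> 0"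
    show "((\<lambda>r. S r x) has_vector_derivative generator S (S s x)) (at s within {0..})" by (rule deriv[OF x s])
    show "generator S (S s x) = dir_deriv_plus S s x (generator S x)" unfolding ddp_eq by (rule gen_eqs(1)[OF x s])
    show "generator S (S s x) = dir_deriv_minus S s x (generator S x)" unfolding ddm_eq by (rule gen_eqs(2)[OF x s])
  qed
  have P1: "S t x \<in> gen_domain S \<and>
      generator S (S t x) = dir_deriv_plus S t x (generator S x) \<and>
      (linear (S t) \<longrightarrow> generator S (S t x) = S t (generator S x))"
    unfolding ddp_eq using part_i[OF x t] part_i_lin[OF x t] by blast
  have P2: "t > 0 \<longrightarrow>
        ((\<lambda>h. (1 / h) *\<^sub>R (S t x - S (t - h) x)) \<longlongrightarrow> dir_deriv_minus S t x (generator S x)) (at_right 0)"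
    unfolding ddm_eq using part_ii[OF x] by blast
  have P3: "dir_deriv_plus S t x (generator S x) = dir_deriv_minus S t x (generator S x)"
    unfolding ddp_eq ddm_eq by (rule part_iii_eq[OF x t])
  show ?thesis using P1 P2 P3 D gcont[OF x] I I2 I3 by blast
qed


end
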